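(* Fix $b>0$, $c>0$ and $0<\theta<c$, and let $a>0$ vary. There exists a finite threshold $\bar a_F$ such that for every $a\ge\bar a_F$ the truncated contest admits no on-domain mixed equilibrium.
   Context: $P(x,y)=\tfrac12+(x-y)\bigl(c-b(x+y)+axy\bigr)$, $\bar P=\min\{1,\max\{0,P\}\}$. The truncated contest is the two-player complete-information game with efforts $x,y\ge0$ and payoffs $\bar P(x,y)-\theta x$ for $X$ and $1-\bar P(x,y)-\theta y$ for $Y$; mixed strategies are probability distributions on $[0,\infty)$ with finite second moments. A mixed equilibrium is one in which some player uses a nondegenerate distribution; it is on-domain if $0\le P(x,y)\le1$ for all pairs $(x,y)$ in the product of the supports of the equilibrium strategies. *)

theory Defs
  imports "HOL-Probability.Probability"
begin

definition contestP :: "real \<Rightarrow> real \<Rightarrow> real \<Rightarrow> real \<Rightarrow> real \<Rightarrow> real" where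
  "contestP a b c x y = 1/2 + (x - y) * (c - b * (x + y) + a * x * y)"

definition contestPbar :: "real \<Rightarrow> real \<Rightarrow> real \<Rightarrow> real \<Rightarrow> real \<Rightarrow> real" where
  "contestPbar a b c x y = min 1 (max 0 (contestP a b c x y))"

definition mixed_strategy :: "real measure \<Rightarrow> bool" where
  "mixed_strategy \<mu> \<longleftrightarrow> prob_space \<mu> \<and> sets \<mu> = sets borel \<and>
     (AE x in \<mu>. 0 \<le> x) \<and> integrable \<mu> (\<lambda>x. x\<^sup>2)"

definition payoffX :: "real \<Rightarrow> real \<Rightarrow> real \<Rightarrow> real \<Rightarrow> real measure \<Rightarrow> real measure \<Rightarrow> real" where
  "payoffX a b c \<theta> \<mu> \<nu> =
     (\<integral>z. contestPbar a b c (fst z) (snd z) - \<theta> * fst z \<partial>(\<mu> \<Otimes>\<^sub>M \<nu>))"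

definition payoffY :: "real \<Rightarrow> real \<Rightarrow> real \<Rightarrow> real \<Rightarrow> real measure \<Rightarrow> real measure \<Rightarrow> real" where
  "payoffY a b c \<theta> \<mu> \<nu> =
     (\<integral>z. 1 - contestPbar a b c (fst z) (snd z) - \<theta> * snd z \<partial>(\<mu> \<Otimes>\<^sub>M \<nu>))"

definition truncated_equilibrium ::
  "real \<Rightarrow> real \<Rightarrow> real \<Rightarrow> real \<Rightarrow> real measure \<Rightarrow> real measure \<Rightarrow> bool" where
  "truncated_equilibrium a b c \<theta> \<mu> \<nu> \<longleftrightarrow>
     mixed_strategy \<mu> \<and> mixed_strategy \<nu> \<and>
     (\<forall>\<mu>'. mixed_strategy \<mu>' \<longrightarrow> payoffX a b c \<theta> \<mu>' \<nu> \<le> payoffX a b c \<theta> \<mu> \<nu>) \<and>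
     (\<forall>\<nu>'. mixed_strategy \<nu>' \<longrightarrow> payoffY a b c \<theta> \<mu> \<nu>' \<le> payoffY a b c \<theta> \<mu> \<nu>)"

definition msupport :: "real measure \<Rightarrow> real set" where
  "msupport \<mu> = {x. \<forall>e>0. emeasure \<mu> (ball x e) > 0}"

definition nondegenerate :: "real measure \<Rightarrow> bool" where
  "nondegenerate \<mu> \<longleftrightarrow> \<not> (\<exists>z. AE x in \<mu>. x = z)"

definition mixed_equilibrium ::
  "real \<Rightarrow> real \<Rightarrow> real \<Rightarrow> real \<Rightarrow> real measure \<Rightarrow> real measure \<Rightarrow> bool" where
  "mixed_equilibrium a b c \<theta> \<mu> \<nu> \<longleftrightarrow>
     truncated_equilibrium a b c \<theta> \<mu> \<nu> \<and> (nondegenerate \<mu> \<or> nondegenerate \<nu>)"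

definition on_domain :: "real \<Rightarrow> real \<Rightarrow> real \<Rightarrow> real measure \<Rightarrow> real measure \<Rightarrow> bool" where
  "on_domain a b c \<mu> \<nu> \<longleftrightarrow>
     (\<forall>x\<in>msupport \<mu>. \<forall>y\<in>msupport \<nu>. 0 \<le> contestP a b c x y \<and> contestP a b c x y \<le> 1)"

end

theory Submission
  imports Defs
begin

lemma P_diag: "contestP a b c x x = 1/2"
  by (simp add: contestP_def)

lemma P_swap: "contestP a b c y x = 1 - contestP a b c x y"
  by (simp add: contestP_def algebra_simps)

lemma clip_swap: "min 1 (max 0 (1 - t)) = 1 - min 1 (max 0 (t::real))"
  by (auto simp: min_def max_def)

lemma Pbar_swap: "contestPbar a b c y x = 1 - contestPbar a b c x y"
  unfolding contestPbar_def P_swap[of a b c y x] by (rule clip_swap)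

lemma Pbar_diag: "contestPbar a b c x x = 1/2"
  by (simp add: contestPbar_def P_diag)

lemma Pbar_bounds: "0 \<le> contestPbar a b c x y" "contestPbar a b c x y \<le> 1"
  by (auto simp: contestPbar_def)

lemma Pbar_meas[measurable]: "(\<lambda>z. contestPbar a b c (fst z) (snd z)) \<in> borel_measurable (borel \<Otimes>\<^sub>M borel)"
  unfolding contestPbar_def contestP_def by measurable

lemma ms_prob: "mixed_strategy \<rho> \<Longrightarrow> prob_space \<rho>"
  by (simp add: mixed_strategy_def)

lemma ms_sets: "mixed_strategy \<rho> \<Longrightarrow> sets \<rho> = sets borel"
  by (simp add: mixed_strategy_def)

lemma ms_space: "mixed_strategy \<rho> \<Longrightarrow> space \<rho> = UNIV"
  using ms_sets sets_eq_imp_space_eq by fastforce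

lemma ms_meas: "mixed_strategy \<rho> \<Longrightarrow> f \<in> borel_measurable borel \<Longrightarrow> f \<in> borel_measurable \<rho>"
  using measurable_cong_sets[OF ms_sets refl] by blast

lemma ms_pair_meas:
  assumes "mixed_strategy \<rho>" "mixed_strategy \<sigma>" "f \<in> borel_measurable (borel \<Otimes>\<^sub>M borel)"
  shows "f \<in> borel_measurable (\<rho> \<Otimes>\<^sub>M \<sigma>)"
proof -
  have "sets (\<rho> \<Otimes>\<^sub>M \<sigma>) = sets (borel \<Otimes>\<^sub>M borel)"
    by (rule sets_pair_measure_cong) (use assms ms_sets in auto)
  then show ?thesis using assms(3) measurable_cong_sets by blast
qed

lemma ms_int2: "mixed_strategy \<rho> \<Longrightarrow> integrable \<rho> (\<lambda>x. x\<^sup>2)"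
  by (simp add: mixed_strategy_def)

lemma ms_int1: assumes "mixed_strategy \<rho>" shows "integrable \<rho> (\<lambda>x. x)"
proof -
  interpret prob_space \<rho> using assms ms_prob by blast
  have "integrable \<rho> (\<lambda>x. 1 + x\<^sup>2)" using ms_int2[OF assms] by simp
  moreover have "(\<lambda>x::real. x) \<in> borel_measurable \<rho>" using ms_meas[OF assms, of "\<lambda>x. x"] by simp
  moreover have "AE x in \<rho>. norm x \<le> norm (1 + x\<^sup>2)"
  proof (rule AE_I2)
    fix x :: real
    have "\<bar>x\<bar> \<le> 1 + x\<^sup>2"
    proof (cases "\<bar>x\<bar> \<le> 1")
      case True then show ?thesis by (simp add: add_increasing2)
    next
      case False
      then have "\<bar>x\<bar> * 1 \<le> \<bar>x\<bar> * \<bar>x\<bar>" by (intro mult_left_mono) auto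
      then show ?thesis by (simp add: power2_eq_square)
    qed
    then show "norm x \<le> norm (1 + x\<^sup>2)" by simp
  qed
  ultimately show ?thesis using Bochner_Integration.integrable_bound[where M=\<rho> and f="\<lambda>x. 1 + x\<^sup>2" and g="\<lambda>x. x"] by blast
qed

lemma ms_nonneg: "mixed_strategy \<rho> \<Longrightarrow> AE x in \<rho>. 0 \<le> x"
  by (simp add: mixed_strategy_def)

lemma ms_return: assumes "0 \<le> z" shows "mixed_strategy (return borel z)"
proof -
  interpret prob_space "return borel z" by (rule prob_space_return) simp
  have ae: "AE x in return borel z. x = z" by (simp add: AE_return)
  have "integrable (return borel z) (\<lambda>x::real. x\<^sup>2)"
    by (rule integrable_const_bound[where B="z\<^sup>2"]) (use ae in auto)
  then show ?thesis unfolding mixed_strategy_def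
    using ae assms prob_space_return[of z borel] by (auto elim!: AE_mp)
qed

lemma ms_pps: "mixed_strategy \<rho> \<Longrightarrow> mixed_strategy \<sigma> \<Longrightarrow> pair_prob_space \<rho> \<sigma>"
  using ms_prob by (simp add: pair_prob_space_def pair_sigma_finite_def prob_space_imp_sigma_finite)

lemma sets_pair_borel:
  assumes "sets M = sets borel" "sets N = sets borel"
  shows "f \<in> borel_measurable (borel \<Otimes>\<^sub>M borel) \<Longrightarrow> f \<in> borel_measurable (M \<Otimes>\<^sub>M N)"
proof -
  have "sets (M \<Otimes>\<^sub>M N) = sets (borel \<Otimes>\<^sub>M borel)"
    by (rule sets_pair_measure_cong) (use assms in auto)
  then show "f \<in> borel_measurable (borel \<Otimes>\<^sub>M borel) \<Longrightarrow> f \<in> borel_measurable (M \<Otimes>\<^sub>M N)"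
    using measurable_cong_sets by blast
qed

definition Gf :: "real \<Rightarrow> real \<Rightarrow> real \<Rightarrow> real \<Rightarrow> real measure \<Rightarrow> real \<Rightarrow> real" where
  "Gf a b c \<theta> \<rho> z = (\<integral>w. contestPbar a b c z w \<partial>\<rho>) - \<theta> * z"

definition Mf :: "real \<Rightarrow> real measure \<Rightarrow> real" where
  "Mf \<theta> \<rho> = 1/2 - \<theta> * (\<integral>w. w \<partial>\<rho>)"

lemma Pbar_int_meas:
  assumes "mixed_strategy \<rho>" "sets M = sets borel"
  shows "(\<lambda>x. \<integral>y. contestPbar a b c x y \<partial>\<rho>) \<in> borel_measurable M"
proof -
  interpret prob_space \<rho> using assms ms_prob by blast
  have "case_prod (contestPbar a b c) \<in> borel_measurable (M \<Otimes>\<^sub>M \<rho>)"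
    using sets_pair_borel[OF assms(2) ms_sets[OF assms(1)] Pbar_meas[of a b c]]
    by (simp add: case_prod_beta')
  then show ?thesis by (rule borel_measurable_lebesgue_integral)
qed

lemma Pbar_int_sec:
  assumes "mixed_strategy \<rho>"
  shows "integrable \<rho> (\<lambda>y. contestPbar a b c x y)"
proof -
  interpret prob_space \<rho> using assms ms_prob by blast
  have m: "(\<lambda>y. contestPbar a b c x y) \<in> borel_measurable borel"
    unfolding contestPbar_def contestP_def by measurable
  show ?thesis
    by (rule integrable_const_bound[where B=1]) (use Pbar_bounds ms_meas[OF assms m] in auto)
qed

lemma Pbar_pair_int:
  assumes "mixed_strategy \<mu>" "mixed_strategy \<nu>"
  shows "integrable (\<mu> \<Otimes>\<^sub>M \<nu>) (\<lambda>(x,y). contestPbar a b c x y)"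
proof -
  interpret pair_prob_space \<mu> \<nu> using ms_pps assms by blast
  have m: "(\<lambda>(x,y). contestPbar a b c x y) \<in> borel_measurable (\<mu> \<Otimes>\<^sub>M \<nu>)"
    using sets_pair_borel[OF ms_sets[OF assms(1)] ms_sets[OF assms(2)] Pbar_meas[of a b c]]
    by (simp add: case_prod_beta')
  show ?thesis
    by (rule integrable_const_bound[where B=1]) (use Pbar_bounds m in auto)
qed

lemma fst_pair_int:
  assumes "mixed_strategy \<mu>" "mixed_strategy \<nu>"
  shows "integrable (\<mu> \<Otimes>\<^sub>M \<nu>) (\<lambda>(x,y). x)" "integrable (\<mu> \<Otimes>\<^sub>M \<nu>) (\<lambda>(x,y). y)"
proof -
  interpret pair_prob_space \<mu> \<nu> using ms_pps assms by blast
  have m1: "(\<lambda>(x::real,y::real). x) \<in> borel_measurable (\<mu> \<Otimes>\<^sub>M \<nu>)"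
    using sets_pair_borel[OF ms_sets[OF assms(1)] ms_sets[OF assms(2)], of fst]
    by (simp add: case_prod_beta')
  have m2: "(\<lambda>(x::real,y::real). y) \<in> borel_measurable (\<mu> \<Otimes>\<^sub>M \<nu>)"
    using sets_pair_borel[OF ms_sets[OF assms(1)] ms_sets[OF assms(2)], of snd]
    by (simp add: case_prod_beta')
  show "integrable (\<mu> \<Otimes>\<^sub>M \<nu>) (\<lambda>(x,y). x)"
  proof (rule Fubini_integrable[OF m1])
    show "integrable \<mu> (\<lambda>x. \<integral>y. norm (case (x, y) of (x, y) \<Rightarrow> x) \<partial>\<nu>)"
      using ms_int1[OF assms(1)] by (simp add: M2.prob_space)
    show "AE x in \<mu>. integrable \<nu> (\<lambda>y. case (x, y) of (x, y) \<Rightarrow> x)"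
      by simp
  qed
  show "integrable (\<mu> \<Otimes>\<^sub>M \<nu>) (\<lambda>(x,y). y)"
  proof (rule Fubini_integrable[OF m2])
    show "integrable \<mu> (\<lambda>x. \<integral>y. norm (case (x, y) of (x, y) \<Rightarrow> y) \<partial>\<nu>)"
      using ms_int1[OF assms(2)] by simp
    show "AE x in \<mu>. integrable \<nu> (\<lambda>y. case (x, y) of (x, y) \<Rightarrow> y)"
      using ms_int1[OF assms(2)] by simp
  qed
qed



lemma Pbar_meas2[measurable]: "(\<lambda>z. contestPbar a b c (snd z) (fst z)) \<in> borel_measurable (borel \<Otimes>\<^sub>M borel)"
  unfolding contestPbar_def contestP_def by measurable

lemma Pbar_pair_int2:
  assumes "mixed_strategy \<mu>" "mixed_strategy \<nu>"
  shows "integrable (\<mu> \<Otimes>\<^sub>M \<nu>) (\<lambda>(x,y). contestPbar a b c y x)"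
proof -
  interpret pair_prob_space \<mu> \<nu> using ms_pps assms by blast
  have m: "(\<lambda>(x,y). contestPbar a b c y x) \<in> borel_measurable (\<mu> \<Otimes>\<^sub>M \<nu>)"
    using sets_pair_borel[OF ms_sets[OF assms(1)] ms_sets[OF assms(2)] Pbar_meas2[of a b c]]
    by (simp add: case_prod_beta')
  show ?thesis
    by (rule integrable_const_bound[where B=1]) (use Pbar_bounds m in auto)
qed

lemma int_G:
  assumes "mixed_strategy \<mu>" "mixed_strategy \<nu>"
  shows "integrable \<mu> (\<lambda>x. \<integral>y. contestPbar a b c x y \<partial>\<nu>)" "integrable \<mu> (Gf a b c \<theta> \<nu>)"
proof -
  interpret pair_prob_space \<mu> \<nu> using ms_pps assms by blast
  show i: "integrable \<mu> (\<lambda>x. \<integral>y. contestPbar a b c x y \<partial>\<nu>)"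
    using integrable_fst[OF Pbar_pair_int[OF assms]] by simp
  show "integrable \<mu> (Gf a b c \<theta> \<nu>)"
    unfolding Gf_def using i ms_int1[OF assms(1)] by auto
qed

lemma payX_eq:
  assumes "mixed_strategy \<mu>" "mixed_strategy \<nu>"
  shows "payoffX a b c \<theta> \<mu> \<nu> = (\<integral>x. Gf a b c \<theta> \<nu> x \<partial>\<mu>)"
proof -
  interpret pair_prob_space \<mu> \<nu> using ms_pps assms by blast
  have i1: "integrable (\<mu> \<Otimes>\<^sub>M \<nu>) (\<lambda>(x,y). contestPbar a b c x y)" by (rule Pbar_pair_int[OF assms])
  have i2: "integrable (\<mu> \<Otimes>\<^sub>M \<nu>) (\<lambda>(x,y). x)" by (rule fst_pair_int(1)[OF assms])
  have i3: "integrable (\<mu> \<Otimes>\<^sub>M \<nu>) (\<lambda>z. (case z of (x,y) \<Rightarrow> contestPbar a b c x y) - \<theta> * (case z of (x,y) \<Rightarrow> x))"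
    using i1 i2 by auto
  have e: "(\<lambda>z. (case z of (x,y) \<Rightarrow> contestPbar a b c x y) - \<theta> * (case z of (x,y) \<Rightarrow> x))
      = (\<lambda>(x,y). contestPbar a b c x y - \<theta> * x)" by auto
  have i4: "integrable (\<mu> \<Otimes>\<^sub>M \<nu>) (\<lambda>(x,y). contestPbar a b c x y - \<theta> * x)"
    using i3 unfolding e .
  have "payoffX a b c \<theta> \<mu> \<nu> = integral\<^sup>L (\<mu> \<Otimes>\<^sub>M \<nu>) (\<lambda>(x,y). contestPbar a b c x y - \<theta> * x)"
    unfolding payoffX_def by (simp add: case_prod_beta')
  also have "\<dots> = (\<integral>x. (\<integral>y. contestPbar a b c x y - \<theta> * x \<partial>\<nu>) \<partial>\<mu>)"
    using integral_fst[OF i4] by simp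
  also have "\<dots> = (\<integral>x. Gf a b c \<theta> \<nu> x \<partial>\<mu>)"
  proof (rule Bochner_Integration.integral_cong[OF refl])
    fix x
    have "(\<integral>y. contestPbar a b c x y - \<theta> * x \<partial>\<nu>) = (\<integral>y. contestPbar a b c x y \<partial>\<nu>) - (\<integral>y. \<theta> * x \<partial>\<nu>)"
      by (rule Bochner_Integration.integral_diff) (use Pbar_int_sec[OF assms(2)] in auto)
    then show "(\<integral>y. contestPbar a b c x y - \<theta> * x \<partial>\<nu>) = Gf a b c \<theta> \<nu> x"
      by (simp add: Gf_def M2.prob_space)
  qed
  finally show ?thesis .
qed

lemma payY_eq:
  assumes "mixed_strategy \<mu>" "mixed_strategy \<nu>"
  shows "payoffY a b c \<theta> \<mu> \<nu> = (\<integral>y. Gf a b c \<theta> \<mu> y \<partial>\<nu>)"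
proof -
  interpret pair_prob_space \<mu> \<nu> using ms_pps assms by blast
  have i1: "integrable (\<mu> \<Otimes>\<^sub>M \<nu>) (\<lambda>(x,y). contestPbar a b c y x)" by (rule Pbar_pair_int2[OF assms])
  have i2: "integrable (\<mu> \<Otimes>\<^sub>M \<nu>) (\<lambda>(x,y). y)" by (rule fst_pair_int(2)[OF assms])
  have i3: "integrable (\<mu> \<Otimes>\<^sub>M \<nu>) (\<lambda>z. (case z of (x,y) \<Rightarrow> contestPbar a b c y x) - \<theta> * (case z of (x,y) \<Rightarrow> y))"
    using i1 i2 by auto
  have e: "(\<lambda>z. (case z of (x,y) \<Rightarrow> contestPbar a b c y x) - \<theta> * (case z of (x,y) \<Rightarrow> y))
      = (\<lambda>(x,y). contestPbar a b c y x - \<theta> * y)" by auto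
  have i4: "integrable (\<mu> \<Otimes>\<^sub>M \<nu>) (\<lambda>(x,y). contestPbar a b c y x - \<theta> * y)"
    using i3 unfolding e .
  have "payoffY a b c \<theta> \<mu> \<nu> = integral\<^sup>L (\<mu> \<Otimes>\<^sub>M \<nu>) (\<lambda>(x,y). contestPbar a b c y x - \<theta> * y)"
    unfolding payoffY_def by (simp add: case_prod_beta' Pbar_swap[of a b c "snd _" "fst _"])
  also have "\<dots> = (\<integral>y. (\<integral>x. contestPbar a b c y x - \<theta> * y \<partial>\<mu>) \<partial>\<nu>)"
    using integral_snd[OF i4] by simp
  also have "\<dots> = (\<integral>y. Gf a b c \<theta> \<mu> y \<partial>\<nu>)"
  proof (rule Bochner_Integration.integral_cong[OF refl])
    fix y
    have "(\<integral>x. contestPbar a b c y x - \<theta> * y \<partial>\<mu>) = (\<integral>x. contestPbar a b c y x \<partial>\<mu>) - (\<integral>x. \<theta> * y \<partial>\<mu>)"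
      by (rule Bochner_Integration.integral_diff) (use Pbar_int_sec[OF assms(1)] in auto)
    then show "(\<integral>x. contestPbar a b c y x - \<theta> * y \<partial>\<mu>) = Gf a b c \<theta> \<mu> y"
      by (simp add: Gf_def M1.prob_space)
  qed
  finally show ?thesis .
qed

lemma swap_inner:
  assumes "mixed_strategy \<mu>"
  shows "(\<integral>x. contestPbar a b c x y \<partial>\<mu>) = 1 - (\<integral>x. contestPbar a b c y x \<partial>\<mu>)"
proof -
  interpret prob_space \<mu> using assms ms_prob by blast
  have "(\<integral>x. contestPbar a b c x y \<partial>\<mu>) = (\<integral>x. 1 - contestPbar a b c y x \<partial>\<mu>)"
    by (simp add: Pbar_swap[of a b c x y for x])
  also have "\<dots> = 1 - (\<integral>x. contestPbar a b c y x \<partial>\<mu>)"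
    by (subst Bochner_Integration.integral_diff) (use Pbar_int_sec[OF assms] prob_space in auto)
  finally show ?thesis .
qed

lemma cross_sum:
  assumes "mixed_strategy \<mu>" "mixed_strategy \<nu>"
  shows "(\<integral>x. (\<integral>y. contestPbar a b c x y \<partial>\<nu>) \<partial>\<mu>) + (\<integral>y. (\<integral>x. contestPbar a b c y x \<partial>\<mu>) \<partial>\<nu>) = 1"
proof -
  interpret pair_prob_space \<mu> \<nu> using ms_pps assms by blast
  have F: "(\<integral>y. (\<integral>x. contestPbar a b c x y \<partial>\<mu>) \<partial>\<nu>) = (\<integral>x. (\<integral>y. contestPbar a b c x y \<partial>\<nu>) \<partial>\<mu>)"
    by (rule Fubini_integral) (use Pbar_pair_int[OF assms] in simp)
  have "(\<integral>y. (\<integral>x. contestPbar a b c x y \<partial>\<mu>) \<partial>\<nu>) = (\<integral>y. 1 - (\<integral>x. contestPbar a b c y x \<partial>\<mu>) \<partial>\<nu>)"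
    using swap_inner[OF assms(1)] by simp
  also have "\<dots> = 1 - (\<integral>y. (\<integral>x. contestPbar a b c y x \<partial>\<mu>) \<partial>\<nu>)"
    by (subst Bochner_Integration.integral_diff) (use int_G(1)[OF assms(2,1)] M2.prob_space in auto)
  finally show ?thesis using F by simp
qed

lemma self_half:
  assumes "mixed_strategy \<rho>"
  shows "(\<integral>x. (\<integral>y. contestPbar a b c x y \<partial>\<rho>) \<partial>\<rho>) = 1/2"
  using cross_sum[OF assms assms, of a b c] by simp

lemma payX_self:
  assumes "mixed_strategy \<nu>"
  shows "(\<integral>x. Gf a b c \<theta> \<nu> x \<partial>\<nu>) = Mf \<theta> \<nu>"
proof -
  interpret prob_space \<nu> using assms ms_prob by blast
  have "(\<integral>x. Gf a b c \<theta> \<nu> x \<partial>\<nu>) = (\<integral>x. (\<integral>y. contestPbar a b c x y \<partial>\<nu>) \<partial>\<nu>) - (\<integral>x. \<theta> * x \<partial>\<nu>)"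
    unfolding Gf_def
    by (rule Bochner_Integration.integral_diff) (use int_G(1)[OF assms assms] ms_int1[OF assms] in auto)
  then show ?thesis using self_half[OF assms] by (simp add: Mf_def)
qed

lemma G_meas: assumes "mixed_strategy \<rho>" shows "Gf a b c \<theta> \<rho> \<in> borel_measurable borel"
proof -
  have "(\<lambda>x. \<integral>y. contestPbar a b c x y \<partial>\<rho>) \<in> borel_measurable borel"
    by (rule Pbar_int_meas[OF assms]) simp
  then show ?thesis unfolding Gf_def by (simp add: fun_diff_def)
qed

lemma pay_ret:
  assumes "mixed_strategy \<rho>" "0 \<le> z"
  shows "payoffX a b c \<theta> (return borel z) \<rho> = Gf a b c \<theta> \<rho> z"
        "payoffY a b c \<theta> \<rho> (return borel z) = Gf a b c \<theta> \<rho> z"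
  using payX_eq[OF ms_return[OF assms(2)] assms(1)] payY_eq[OF assms(1) ms_return[OF assms(2)]]
    integral_return[of z borel "Gf a b c \<theta> \<rho>"] G_meas[OF assms(1)] by auto

lemma sum_pay:
  assumes "mixed_strategy \<mu>" "mixed_strategy \<nu>"
  shows "(\<integral>x. Gf a b c \<theta> \<nu> x \<partial>\<mu>) + (\<integral>y. Gf a b c \<theta> \<mu> y \<partial>\<nu>) = Mf \<theta> \<mu> + Mf \<theta> \<nu>"
proof -
  interpret M: prob_space \<mu> using assms ms_prob by blast
  interpret N: prob_space \<nu> using assms ms_prob by blast
  have "(\<integral>x. Gf a b c \<theta> \<nu> x \<partial>\<mu>) = (\<integral>x. (\<integral>y. contestPbar a b c x y \<partial>\<nu>) \<partial>\<mu>) - (\<integral>x. \<theta> * x \<partial>\<mu>)"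
    unfolding Gf_def
    by (rule Bochner_Integration.integral_diff) (use int_G(1)[OF assms] ms_int1[OF assms(1)] in auto)
  moreover have "(\<integral>y. Gf a b c \<theta> \<mu> y \<partial>\<nu>) = (\<integral>y. (\<integral>x. contestPbar a b c y x \<partial>\<mu>) \<partial>\<nu>) - (\<integral>y. \<theta> * y \<partial>\<nu>)"
    unfolding Gf_def
    by (rule Bochner_Integration.integral_diff) (use int_G(1)[OF assms(2,1)] ms_int1[OF assms(2)] in auto)
  ultimately show ?thesis using cross_sum[OF assms, of a b c] by (simp add: Mf_def)
qed

lemma ae_eq_max:
  assumes "prob_space \<rho>" "integrable \<rho> g" "AE x in \<rho>. g x \<le> m" "integral\<^sup>L \<rho> g = m"
  shows "AE x in \<rho>. g x = (m::real)"
proof -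
  interpret prob_space \<rho> by fact
  have i: "integrable \<rho> (\<lambda>x. m - g x)" using assms(2) by auto
  have "integral\<^sup>L \<rho> (\<lambda>x. m - g x) = 0"
    using assms(2,4) by (simp add: Bochner_Integration.integral_diff prob_space)
  then have "AE x in \<rho>. m - g x = 0"
    using integral_nonneg_eq_0_iff_AE[OF i] assms(3) by (auto elim: AE_mp)
  then show ?thesis by (auto elim: AE_mp)
qed

lemma eq_facts:
  assumes eq: "truncated_equilibrium a b c \<theta> \<mu> \<nu>"
  shows "mixed_strategy \<mu>" "mixed_strategy \<nu>"
    "\<forall>z\<ge>0. Gf a b c \<theta> \<nu> z \<le> Mf \<theta> \<nu>" "\<forall>z\<ge>0. Gf a b c \<theta> \<mu> z \<le> Mf \<theta> \<mu>"
    "AE x in \<mu>. Gf a b c \<theta> \<nu> x = Mf \<theta> \<nu>" "AE x in \<nu>. Gf a b c \<theta> \<nu> x = Mf \<theta> \<nu>"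
    "AE x in \<mu>. Gf a b c \<theta> \<mu> x = Mf \<theta> \<mu>" "AE x in \<nu>. Gf a b c \<theta> \<mu> x = Mf \<theta> \<mu>"
proof -
  note E = eq[unfolded truncated_equilibrium_def]
  show mu: "mixed_strategy \<mu>" and nu: "mixed_strategy \<nu>" using E by auto
  have dX: "payoffX a b c \<theta> \<mu>' \<nu> \<le> payoffX a b c \<theta> \<mu> \<nu>" if "mixed_strategy \<mu>'" for \<mu>'
    using E that by auto
  have dY: "payoffY a b c \<theta> \<mu> \<nu>' \<le> payoffY a b c \<theta> \<mu> \<nu>" if "mixed_strategy \<nu>'" for \<nu>'
    using E that by auto
  define UX where "UX = (\<integral>x. Gf a b c \<theta> \<nu> x \<partial>\<mu>)"
  define UY where "UY = (\<integral>y. Gf a b c \<theta> \<mu> y \<partial>\<nu>)"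
  have X1: "Mf \<theta> \<nu> \<le> UX" using dX[OF nu] payX_eq[OF nu nu] payX_eq[OF mu nu] payX_self[OF nu]
    unfolding UX_def by simp
  have Y1: "Mf \<theta> \<mu> \<le> UY" using dY[OF mu] payY_eq[OF mu mu] payY_eq[OF mu nu] payX_self[OF mu]
    unfolding UY_def by simp
  have S: "UX + UY = Mf \<theta> \<mu> + Mf \<theta> \<nu>" unfolding UX_def UY_def by (rule sum_pay[OF mu nu])
  have UXe: "UX = Mf \<theta> \<nu>" and UYe: "UY = Mf \<theta> \<mu>" using X1 Y1 S by linarith+
  show A: "\<forall>z\<ge>0. Gf a b c \<theta> \<nu> z \<le> Mf \<theta> \<nu>"
  proof (intro allI impI)
    fix z :: real assume "0 \<le> z"
    then show "Gf a b c \<theta> \<nu> z \<le> Mf \<theta> \<nu>"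
      using dX[OF ms_return[OF \<open>0 \<le> z\<close>]] pay_ret[OF nu \<open>0 \<le> z\<close>] payX_eq[OF mu nu] UXe
      unfolding UX_def by simp
  qed
  show B: "\<forall>z\<ge>0. Gf a b c \<theta> \<mu> z \<le> Mf \<theta> \<mu>"
  proof (intro allI impI)
    fix z :: real assume "0 \<le> z"
    then show "Gf a b c \<theta> \<mu> z \<le> Mf \<theta> \<mu>"
      using dY[OF ms_return[OF \<open>0 \<le> z\<close>]] pay_ret[OF mu \<open>0 \<le> z\<close>] payY_eq[OF mu nu] UYe
      unfolding UY_def by simp
  qed
  have leA: "AE x in \<rho>. Gf a b c \<theta> \<nu> x \<le> Mf \<theta> \<nu>" if "mixed_strategy \<rho>" for \<rho>
    using ms_nonneg[OF that] A by (auto elim: AE_mp)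
  have leB: "AE x in \<rho>. Gf a b c \<theta> \<mu> x \<le> Mf \<theta> \<mu>" if "mixed_strategy \<rho>" for \<rho>
    using ms_nonneg[OF that] B by (auto elim: AE_mp)
  show "AE x in \<mu>. Gf a b c \<theta> \<nu> x = Mf \<theta> \<nu>"
    by (rule ae_eq_max[OF ms_prob[OF mu] int_G(2)[OF mu nu] leA[OF mu]]) (use UXe UX_def in simp)
  show "AE x in \<nu>. Gf a b c \<theta> \<nu> x = Mf \<theta> \<nu>"
    by (rule ae_eq_max[OF ms_prob[OF nu] int_G(2)[OF nu nu] leA[OF nu]]) (use payX_self[OF nu] in simp)
  show "AE x in \<mu>. Gf a b c \<theta> \<mu> x = Mf \<theta> \<mu>"
    by (rule ae_eq_max[OF ms_prob[OF mu] int_G(2)[OF mu mu] leB[OF mu]]) (use payX_self[OF mu] in simp)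
  show "AE x in \<nu>. Gf a b c \<theta> \<mu> x = Mf \<theta> \<mu>"
    by (rule ae_eq_max[OF ms_prob[OF nu] int_G(2)[OF nu mu] leB[OF nu]]) (use UYe UY_def in simp)
qed


lemma supp_ae:
  assumes "mixed_strategy \<rho>"
  shows "AE x in \<rho>. x \<in> msupport \<rho>"
proof -
  define S where "S = {(q,s). q \<in> \<rat> \<and> s \<in> \<rat> \<and> 0 < s \<and> emeasure \<rho> (ball q s) = 0}"
  have cS: "countable S"
  proof (rule countable_subset)
    show "S \<subseteq> (SIGMA q:\<rat>. \<rat>)" unfolding S_def by auto
    show "countable (SIGMA q:(\<rat>::real set). (\<rat>::real set))" using countable_rat by auto
  qed
  have N: "(\<Union>p\<in>S. ball (fst p) (snd p)) \<in> null_sets \<rho>"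
  proof (rule null_sets_UN'[OF cS])
    fix p assume "p \<in> S"
    then show "ball (fst p) (snd p) \<in> null_sets \<rho>"
      unfolding S_def using ms_sets[OF assms] by (auto simp: null_sets_def)
  qed
  show ?thesis
  proof (rule AE_I'[OF N], rule subsetI)
    fix x assume "x \<in> {x \<in> space \<rho>. x \<notin> msupport \<rho>}"
    then have "x \<notin> msupport \<rho>" by simp
    then obtain e where e: "e > 0" "\<not> emeasure \<rho> (ball x e) > 0" unfolding msupport_def by auto
    then have e0: "emeasure \<rho> (ball x e) = 0" by (simp add: not_gr_zero)
    obtain q where q: "q \<in> \<rat>" "x - e/3 < q" "q < x + e/3"
      using Rats_dense_in_real[of "x - e/3" "x + e/3"] e by auto
    obtain s where s: "s \<in> \<rat>" "e/3 < s" "s < 2*e/3"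
      using Rats_dense_in_real[of "e/3" "2*e/3"] e by auto
    have sub: "ball q s \<subseteq> ball x e"
      using q s by (auto simp: dist_real_def)
    have "emeasure \<rho> (ball q s) \<le> emeasure \<rho> (ball x e)"
      by (rule emeasure_mono[OF sub]) (use ms_sets[OF assms] in simp)
    then have "emeasure \<rho> (ball q s) = 0" using e0 by simp
    then have "(q,s) \<in> S" unfolding S_def using q s e by auto
    moreover have "x \<in> ball q s" using q s by (auto simp: dist_real_def)
    ultimately show "x \<in> (\<Union>p\<in>S. ball (fst p) (snd p))" by force
  qed
qed

lemma ondom_ae:
  assumes mu: "mixed_strategy \<mu>" and nu: "mixed_strategy \<nu>" and od: "on_domain a b c \<mu> \<nu>"
  shows "AE x in \<mu>. AE y in \<nu>. 0 \<le> contestP a b c x y \<and> contestP a b c x y \<le> 1"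
    "AE y in \<nu>. AE x in \<mu>. 0 \<le> contestP a b c y x \<and> contestP a b c y x \<le> 1"
proof -
  show "AE x in \<mu>. AE y in \<nu>. 0 \<le> contestP a b c x y \<and> contestP a b c x y \<le> 1"
    using supp_ae[OF mu]
  proof eventually_elim
    case (elim x)
    show ?case using supp_ae[OF nu]
    proof eventually_elim
      case (elim y)
      then show ?case using od \<open>x \<in> msupport \<mu>\<close> by (auto simp: on_domain_def)
    qed
  qed
  show "AE y in \<nu>. AE x in \<mu>. 0 \<le> contestP a b c y x \<and> contestP a b c y x \<le> 1"
    using supp_ae[OF nu]
  proof eventually_elim
    case (elim y)
    show ?case using supp_ae[OF mu]
    proof eventually_elim
      case (elim x)
      then show ?case using od \<open>y \<in> msupport \<nu>\<close> by (auto simp: on_domain_def P_swap[of a b c y x])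
    qed
  qed
qed

definition m1 :: "real measure \<Rightarrow> real" where "m1 \<rho> = (\<integral>w. w \<partial>\<rho>)"
definition m2 :: "real measure \<Rightarrow> real" where "m2 \<rho> = (\<integral>w. w\<^sup>2 \<partial>\<rho>)"

definition Phi :: "real \<Rightarrow> real \<Rightarrow> real \<Rightarrow> real \<Rightarrow> real measure \<Rightarrow> real \<Rightarrow> real" where
  "Phi a b c \<theta> \<rho> x = (a * m1 \<rho> - b) * x\<^sup>2 + (c - \<theta> - a * m2 \<rho>) * x + (b * m2 \<rho> - (c - \<theta>) * m1 \<rho>)"

lemma P_poly: "contestP a b c x y = (1/2 + c*x - b*x\<^sup>2) + (a*x\<^sup>2 - c) * y + (b - a*x) * y\<^sup>2"
  by (simp add: contestP_def algebra_simps power2_eq_square)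

lemma int_P:
  assumes nu: "mixed_strategy \<nu>"
  shows "(\<integral>y. contestP a b c x y \<partial>\<nu>) = (1/2 + c*x - b*x\<^sup>2) + (a*x\<^sup>2 - c) * m1 \<nu> + (b - a*x) * m2 \<nu>"
proof -
  interpret prob_space \<nu> using nu ms_prob by blast
  have i1: "integrable \<nu> (\<lambda>y. y)" by (rule ms_int1[OF nu])
  have i2: "integrable \<nu> (\<lambda>y. y\<^sup>2)" by (rule ms_int2[OF nu])
  have "(\<integral>y. contestP a b c x y \<partial>\<nu>) = (\<integral>y. (1/2 + c*x - b*x\<^sup>2) + ((a*x\<^sup>2 - c) * y + (b - a*x) * y\<^sup>2) \<partial>\<nu>)"
    by (simp add: P_poly add.assoc)
  also have "\<dots> = (1/2 + c*x - b*x\<^sup>2) + ((\<integral>y. (a*x\<^sup>2 - c) * y \<partial>\<nu>) + (\<integral>y. (b - a*x) * y\<^sup>2 \<partial>\<nu>))"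
    using i1 i2 by (simp add: prob_space)
  also have "\<dots> = (1/2 + c*x - b*x\<^sup>2) + (a*x\<^sup>2 - c) * m1 \<nu> + (b - a*x) * m2 \<nu>"
    by (simp add: m1_def m2_def)
  finally show ?thesis .
qed

lemma G_poly:
  assumes nu: "mixed_strategy \<nu>" and ae: "AE y in \<nu>. 0 \<le> contestP a b c x y \<and> contestP a b c x y \<le> 1"
  shows "Gf a b c \<theta> \<nu> x = Mf \<theta> \<nu> + Phi a b c \<theta> \<nu> x"
proof -
  have "(\<integral>y. contestPbar a b c x y \<partial>\<nu>) = (\<integral>y. contestP a b c x y \<partial>\<nu>)"
  proof (rule integral_cong_AE)
    show "(\<lambda>y. contestPbar a b c x y) \<in> borel_measurable \<nu>"
      by (rule ms_meas[OF nu]) (unfold contestPbar_def contestP_def, measurable)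
    show "(\<lambda>y. contestP a b c x y) \<in> borel_measurable \<nu>"
      by (rule ms_meas[OF nu]) (unfold contestP_def, measurable)
    show "AE y in \<nu>. contestPbar a b c x y = contestP a b c x y"
      using ae by (rule AE_mp) (auto simp: contestPbar_def)
  qed
  then show ?thesis
    unfolding Gf_def Mf_def Phi_def int_P[OF nu] by (simp add: m1_def[symmetric] algebra_simps)
qed

lemma Phi_ae:
  assumes eq: "truncated_equilibrium a b c \<theta> \<mu> \<nu>" and od: "on_domain a b c \<mu> \<nu>"
  shows "AE x in \<mu>. Phi a b c \<theta> \<nu> x = 0" "AE y in \<nu>. Phi a b c \<theta> \<mu> y = 0"
proof -
  note F = eq_facts[OF eq]
  show "AE x in \<mu>. Phi a b c \<theta> \<nu> x = 0"
    using ondom_ae(1)[OF F(1,2) od] F(5) by eventually_elim (use G_poly[OF F(2)] in auto)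
  show "AE y in \<nu>. Phi a b c \<theta> \<mu> y = 0"
    using ondom_ae(2)[OF F(1,2) od] F(8) by eventually_elim (use G_poly[OF F(1)] in auto)
qed


definition S0 :: "real \<Rightarrow> real \<Rightarrow> real \<Rightarrow> real" where
  "S0 b c \<theta> = b + b/c + (2*c + 2) + 4/((c-\<theta>)/b) + 12/((c-\<theta>)/b)\<^sup>2"

lemma pt_bound:
  fixes b c \<theta> s y K :: real
  assumes b: "b > 0" and c: "c > 0" and th: "0 < \<theta>" "\<theta> < c"
    and K: "K = (c-\<theta>)/b" and s: "s \<ge> S0 b c \<theta>" and y: "0 \<le> y"
  shows "contestP (s\<^sup>2) b c (1/s) y \<le> 1" "K/2 \<le> y \<Longrightarrow> contestP (s\<^sup>2) b c (1/s) y \<le> -1"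
proof -
  have K0: "K > 0" using K b th by simp
  define u1 where "u1 = b/c"
  define u2 where "u2 = 4/K"
  define u3 where "u3 = 12/K\<^sup>2"
  have Sd: "S0 b c \<theta> = b + u1 + (2*c + 2) + u2 + u3" unfolding S0_def K u1_def u2_def u3_def ..
  have bc: "0 \<le> u1" "0 < u2" "0 < u3" using b c K0 unfolding u1_def u2_def u3_def by auto
  have ss: "b + u1 + (2*c + 2) + u2 + u3 \<le> s" using s Sd by simp
  have sb: "s \<ge> b + 12/K\<^sup>2" using ss bc c b unfolding u3_def[symmetric] by linarith
  have sbc: "s \<ge> b/c" using ss bc c b unfolding u1_def[symmetric] by linarith
  have sc: "s \<ge> (2*c + 2)" using ss bc c b by linarith
  have sK: "s \<ge> 4/K" using ss bc c b unfolding u2_def[symmetric] by linarith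
  have sb': "s \<ge> b" using ss bc c b by linarith
  have s0: "s > 0" using sc c by linarith
  define z where "z = 1/s"
  have z0: "z > 0" unfolding z_def using s0 by simp
  define g where "g = c - b/s + y*(s-b)"
  have Pe: "contestP (s\<^sup>2) b c (1/s) y = 1/2 + (z - y) * g"
    unfolding contestP_def z_def g_def using s0
    by (simp add: field_simps power2_eq_square)
  have cbs: "0 \<le> c - b/s"
  proof -
    have "b/s \<le> b/(b/c)" using sbc b c s0 by (intro divide_left_mono) auto
    also have "\<dots> = c" using b by simp
    finally show ?thesis by simp
  qed
  have g0: "0 \<le> g" unfolding g_def using cbs y sb' by (simp add: add_nonneg_nonneg)
  show "contestP (s\<^sup>2) b c (1/s) y \<le> 1"
  proof (cases "y \<le> z")
    case True
    have "y * (s - b) \<le> z * s" using True y sb' s0 b by (intro mult_mono) auto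
    also have "z * s = 1" unfolding z_def using s0 by simp
    finally have ys: "y * (s - b) \<le> 1" .
    have "b/s \<ge> 0" using b s0 by simp
    then have "g \<le> c + 1" unfolding g_def using ys by linarith
    have "(z - y) * g \<le> z * (c + 1)"
      using True y \<open>g \<le> c + 1\<close> g0 z0 by (intro mult_mono) auto
    also have "z * (c+1) \<le> 1/2"
      unfolding z_def using sc s0 c by (simp add: field_simps)
    finally show ?thesis unfolding Pe by simp
  next
    case False
    then have "(z - y) * g \<le> 0" using g0 by (simp add: mult_nonpos_nonneg)
    then show ?thesis unfolding Pe by simp
  qed
  assume yK: "K/2 \<le> y"
  have zK: "z \<le> K/4" unfolding z_def using sK s0 K0 by (simp add: field_simps)
  have "K/4 \<le> y - z" using zK yK by simp
  have "(K/2) * (s - b) \<le> y * (s - b)" using yK sb' by (intro mult_right_mono) auto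
  also have "\<dots> \<le> g" unfolding g_def using cbs by simp
  finally have gK: "(K/2) * (s-b) \<le> g" .
  have "(K/4) * ((K/2) * (s - b)) \<le> (y - z) * g"
    using \<open>K/4 \<le> y - z\<close> gK K0 sb' by (intro mult_mono) auto
  moreover have "3/2 \<le> (K/4) * ((K/2) * (s - b))"
  proof -
    have "12/K\<^sup>2 \<le> s - b" using sb by simp
    then have "K\<^sup>2 * (12/K\<^sup>2) \<le> K\<^sup>2 * (s - b)" using K0 by (intro mult_left_mono) auto
    then have "12 \<le> K\<^sup>2 * (s - b)" using K0 by simp
    then show ?thesis by (simp add: power2_eq_square algebra_simps)
  qed
  ultimately have "3/2 \<le> (y - z) * g" by linarith
  then show "contestP (s\<^sup>2) b c (1/s) y \<le> -1" unfolding Pe by (simp add: algebra_simps)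
qed


lemma S0_pos: "b > 0 \<Longrightarrow> c > 0 \<Longrightarrow> \<theta> < c \<Longrightarrow> S0 b c \<theta> > 0"
  unfolding S0_def by (intro add_pos_pos add_pos_nonneg) (auto intro!: divide_nonneg_pos)

lemma caseI:
  fixes a b c \<theta> :: real
  assumes b: "b > 0" and c: "c > 0" and th: "0 < \<theta>" "\<theta> < c"
    and big: "a \<ge> (S0 b c \<theta>)\<^sup>2" and ms: "mixed_strategy \<rho>"
    and le: "\<forall>z\<ge>0. Gf a b c \<theta> \<rho> z \<le> Mf \<theta> \<rho>"
    and h1: "a * m1 \<rho> = b" and h2: "a * m2 \<rho> = c - \<theta>"
  shows False
proof -
  interpret prob_space \<rho> using ms ms_prob by blast
  have Sp: "S0 b c \<theta> > 0" using S0_pos b c th by blast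
  define s where "s = sqrt a"
  have "(S0 b c \<theta>)\<^sup>2 > 0" using Sp by simp
  then have a0: "a > 0" using big by linarith
  have ss: "s \<ge> S0 b c \<theta>" unfolding s_def using big Sp real_le_rsqrt by blast
  have s0: "s > 0" using ss Sp by linarith
  have as: "a = s\<^sup>2" unfolding s_def using a0 by simp
  define K where "K = (c-\<theta>)/b"
  have K0: "K > 0" unfolding K_def using b th by simp
  have m1e: "m1 \<rho> = b/a" using h1 a0 by (simp add: field_simps)
  have m2e': "m2 \<rho> = (c-\<theta>)/a" using h2 a0 by (simp add: field_simps)
  have Kb: "K*b = c-\<theta>" unfolding K_def using b by simp
  have m2e: "m2 \<rho> = K*b/a" using m2e' Kb by simp
  define A where "A = {y::real. K/2 \<le> y}"
  have As: "A \<in> sets \<rho>" unfolding A_def using ms_sets[OF ms] by simp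
  have pos: "measure \<rho> A > 0"
  proof (rule ccontr)
    assume "\<not> measure \<rho> A > 0"
    then have "measure \<rho> A = 0" using measure_nonneg[of \<rho> A] by linarith
    then have N: "A \<in> null_sets \<rho>" using As by (simp add: null_sets_def emeasure_eq_measure)
    have ae1: "AE y in \<rho>. y < K/2"
      by (rule AE_I'[OF N]) (auto simp: A_def)
    have ae2: "AE y in \<rho>. y\<^sup>2 \<le> (K/2) * y"
      using ae1 ms_nonneg[OF ms]
    proof eventually_elim
      case (elim y)
      then have "y * y \<le> (K/2) * y" by (intro mult_right_mono) auto
      then show ?case by (simp add: power2_eq_square)
    qed
    have "m2 \<rho> \<le> (\<integral>y. (K/2) * y \<partial>\<rho>)" unfolding m2_def
      by (rule integral_mono_AE[OF ms_int2[OF ms] _ ae2]) (use ms_int1[OF ms] in auto)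
    also have "\<dots> = (K/2) * m1 \<rho>" by (simp add: m1_def)
    finally have "K*b/a \<le> (K/2) * (b/a)" using m1e m2e by simp
    moreover have "K*b/a > 0" using K0 b a0 by simp
    ultimately show False by (simp add: field_simps)
  qed
  define z where "z = 1/s"
  have z0: "0 \<le> z" unfolding z_def using s0 by simp
  have pw: "AE y in \<rho>. contestP a b c z y + indicator A y \<le> contestPbar a b c z y"
    using ms_nonneg[OF ms]
  proof eventually_elim
    case (elim y)
    have p1: "contestP a b c z y \<le> 1"
      using pt_bound(1)[OF b c th refl ss elim] unfolding as z_def .
    show ?case
    proof (cases "y \<in> A")
      case True
      then have "contestP a b c z y \<le> -1"
        using pt_bound(2)[OF b c th K_def ss elim] unfolding as z_def A_def by simp
      then show ?thesis using True by (simp add: contestPbar_def)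
    next
      case False
      then show ?thesis using p1 by (simp add: contestPbar_def)
    qed
  qed
  have iP: "integrable \<rho> (\<lambda>y. contestP a b c z y)"
  proof -
    have "integrable \<rho> (\<lambda>y. (1/2 + c*z - b*z\<^sup>2) + (a*z\<^sup>2 - c) * y + (b - a*z) * y\<^sup>2)"
      using ms_int1[OF ms] ms_int2[OF ms] by auto
    then show ?thesis by (simp add: P_poly)
  qed
  have iA: "integrable \<rho> (indicator A :: real \<Rightarrow> real)" using As by (intro integrable_real_indicator) (auto simp: emeasure_eq_measure)
  have "(\<integral>y. contestP a b c z y + indicator A y \<partial>\<rho>) \<le> (\<integral>y. contestPbar a b c z y \<partial>\<rho>)"
    by (rule integral_mono_AE[OF _ Pbar_int_sec[OF ms] pw]) (use iP iA in auto)
  moreover have "(\<integral>y. contestP a b c z y + indicator A y \<partial>\<rho>) = (\<integral>y. contestP a b c z y \<partial>\<rho>) + measure \<rho> A"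
    using iP iA ms_space[OF ms] by simp
  ultimately have I: "(\<integral>y. contestP a b c z y \<partial>\<rho>) + measure \<rho> A \<le> (\<integral>y. contestPbar a b c z y \<partial>\<rho>)" by simp
  have az: "a * z\<^sup>2 = 1" unfolding z_def as using s0 by (simp add: field_simps)
  have "(\<integral>y. contestP a b c z y \<partial>\<rho>) - \<theta> * z = (1/2 + c*z - b*z\<^sup>2) + (a*z\<^sup>2 - c) * m1 \<rho> + (b - a*z) * m2 \<rho> - \<theta> * z"
    by (simp add: int_P[OF ms])
  also have "\<dots> = 1/2 - c * m1 \<rho> + b * m2 \<rho>"
  proof -
    have "(a*z\<^sup>2 - c) * m1 \<rho> = z\<^sup>2 * (a * m1 \<rho>) - c * m1 \<rho>" by (simp add: algebra_simps)
    moreover have "(b - a*z) * m2 \<rho> = b * m2 \<rho> - z * (a * m2 \<rho>)" by (simp add: algebra_simps)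
    ultimately show ?thesis using h1 h2 by (simp add: algebra_simps)
  qed
  also have "\<dots> = Mf \<theta> \<rho>"
    unfolding Mf_def m1_def[symmetric] m1e m2e K_def using a0 b by (simp add: field_simps)
  finally have "Mf \<theta> \<rho> + measure \<rho> A \<le> Gf a b c \<theta> \<rho> z"
    using I unfolding Gf_def by linarith
  then show False using le z0 pos by force
qed


lemma P_shift: "contestP a b c (x + e) y = contestP a b c x y + e * (c - 2*b*x + 2*a*x*y - a*y\<^sup>2) + e\<^sup>2 * (a*y - b)"
  by (simp add: contestP_def algebra_simps power2_eq_square)

lemma Pbar_in: "0 \<le> contestP a b c x y \<Longrightarrow> contestP a b c x y \<le> 1 \<Longrightarrow> contestPbar a b c x y = contestP a b c x y"
  by (simp add: contestPbar_def)
lemma Pbar_ge1: "1 \<le> contestP a b c x y \<Longrightarrow> contestPbar a b c x y = 1"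
  by (simp add: contestPbar_def)
lemma Pbar_le0: "contestP a b c x y \<le> 0 \<Longrightarrow> contestPbar a b c x y = 0"
  by (simp add: contestPbar_def)
lemma Pbar_lb: "min 1 (contestP a b c x y) \<le> contestPbar a b c x y"
  by (simp add: contestPbar_def)

definition Wc :: "real \<Rightarrow> real \<Rightarrow> real" where "Wc b \<theta> = 4*\<theta>^3 + 4*b*\<theta> + 16*b*\<theta>^4"
definition A2 :: "real \<Rightarrow> real \<Rightarrow> real \<Rightarrow> real" where
  "A2 b c \<theta> = 1 + 2*b\<^sup>2/(c-\<theta>) + 2*Wc b \<theta>*(c+\<theta>)/(c-\<theta>)"

lemma A2_facts:
  fixes a b c \<theta> :: real
  assumes b: "b > 0" and th: "0 < \<theta>" "\<theta> < c" and a: "a \<ge> A2 b c \<theta>"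
  shows "a \<ge> 1" "a \<ge> 2*b\<^sup>2/(c-\<theta>)" "a > 2*Wc b \<theta>*(c+\<theta>)/(c-\<theta>)"
proof -
  have W: "Wc b \<theta> \<ge> 0" unfolding Wc_def using b th by simp
  have t1: "2*b\<^sup>2/(c-\<theta>) \<ge> 0" using th by simp
  have t2: "2*Wc b \<theta>*(c+\<theta>)/(c-\<theta>) \<ge> 0" using th W by simp
  show "a \<ge> 1" "a \<ge> 2*b\<^sup>2/(c-\<theta>)" "a > 2*Wc b \<theta>*(c+\<theta>)/(c-\<theta>)"
    using a t1 t2 unfolding A2_def by linarith+
qed

lemma diag_lb:
  fixes a b c \<theta> y :: real
  assumes b: "b > 0" and th: "0 < \<theta>" "\<theta> < c" and a: "a \<ge> 2*b\<^sup>2/(c-\<theta>)"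
  shows "c - 2*b*y + a*y\<^sup>2 \<ge> (c+\<theta>)/2"
proof -
  have "2*b\<^sup>2/(c-\<theta>) > 0" using b th by simp
  then have a0: "a > 0" using a by linarith
  have "0 \<le> a * (y - b/a)\<^sup>2" using a0 by simp
  also have "a * (y - b/a)\<^sup>2 = a*y\<^sup>2 - 2*b*y + b\<^sup>2/a" using a0 by (simp add: power2_eq_square field_simps)
  finally have 1: "0 \<le> a*y\<^sup>2 - 2*b*y + b\<^sup>2/a" .
  have "b\<^sup>2/a \<le> (c-\<theta>)/2"
  proof -
    have "2*b\<^sup>2 \<le> a*(c-\<theta>)" using a th by (simp add: field_simps)
    then show ?thesis using a0 by (simp add: field_simps)
  qed
  then show ?thesis using 1 by argo
qed


lemma small_bound:
  fixes e d f r :: real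
  assumes "\<bar>e\<bar> \<le> 1" "\<bar>e\<bar> \<le> r/(\<bar>d\<bar> + \<bar>f\<bar> + 1)" "0 \<le> r"
  shows "\<bar>e*d + e\<^sup>2*f\<bar> \<le> r"
proof -
  define K where "K = \<bar>d\<bar> + \<bar>f\<bar>"
  have K0: "K \<ge> 0" unfolding K_def by simp
  have "\<bar>e*d + e\<^sup>2*f\<bar> \<le> \<bar>e*d\<bar> + \<bar>e\<^sup>2*f\<bar>" by (rule abs_triangle_ineq)
  also have "\<bar>e*d\<bar> + \<bar>e\<^sup>2*f\<bar> = \<bar>e\<bar>*\<bar>d\<bar> + e\<^sup>2*\<bar>f\<bar>" by (simp add: abs_mult)
  also have "e\<^sup>2*\<bar>f\<bar> \<le> \<bar>e\<bar>*\<bar>f\<bar>"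
  proof -
    have "\<bar>e\<bar> * \<bar>e\<bar> \<le> \<bar>e\<bar>" using assms(1) by (intro mult_left_le_one_le) auto
    then have "e\<^sup>2 \<le> \<bar>e\<bar>" by (simp add: power2_eq_square abs_mult_self_eq)
    then show ?thesis by (intro mult_right_mono) auto
  qed
  then have "\<bar>e\<bar>*\<bar>d\<bar> + e\<^sup>2*\<bar>f\<bar> \<le> \<bar>e\<bar>*K" unfolding K_def by (simp add: algebra_simps)
  also have "\<bar>e\<bar>*K \<le> (r/(K+1))*K" using assms(2) K0 unfolding K_def by (intro mult_right_mono) auto
  also have "(r/(K+1))*K \<le> r"
  proof -
    have "r*K \<le> r*(K+1)" using assms(3) by (intro mult_left_mono) auto
    then show ?thesis using K0 by (simp add: field_simps)
  qed
  finally show ?thesis .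
qed

context
  fixes a b c \<theta> y1 y2 q1 q2 M :: real and G :: "real \<Rightarrow> real"
  assumes b: "b>0" and c: "c>0" and th: "0<\<theta>" "\<theta><c" and big: "a \<ge> A2 b c \<theta>"
    and y: "0 \<le> y1" "y1 < y2" and q: "0 < q1" "0 < q2" "q1 + q2 = 1"
    and Gd: "\<And>z. G z = q1 * contestPbar a b c z y1 + q2 * contestPbar a b c z y2 - \<theta> * z"
    and le: "\<And>z. 0 \<le> z \<Longrightarrow> G z \<le> M" and e1: "G y1 = M" and e2: "G y2 = M"
begin

lemma tp_D1: assumes "1 \<le> contestP a b c y1 y2" shows False
proof -
  have p12: "contestPbar a b c y1 y2 = 1" using Pbar_ge1[OF assms] .
  have p21: "contestPbar a b c y2 y1 = 0" using p12 Pbar_swap[of a b c y2 y1] by simp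
  have A: "q1 * (1/2) + q2 - \<theta> * y1 = M" using e1 Gd[of y1] p12 by (simp add: Pbar_diag)
  have B: "q2 * (1/2) - \<theta> * y2 = M" using e2 Gd[of y2] p21 by (simp add: Pbar_diag)
  have "\<theta> * y1 < \<theta> * y2" using th y by simp
  then show False using A B q by argo
qed

lemma tp_D2_sum: assumes "contestP a b c y1 y2 \<le> 0"
  shows "\<theta> * y2 - \<theta> * y1 = 1/2" "M = q1 * (1/2) - \<theta> * y1" "M = q1 + q2 * (1/2) - \<theta> * y2"
    "contestPbar a b c y1 y2 = 0" "contestPbar a b c y2 y1 = 1"
proof -
  show p12: "contestPbar a b c y1 y2 = 0" using Pbar_le0[OF assms] .
  show p21: "contestPbar a b c y2 y1 = 1" using p12 Pbar_swap[of a b c y2 y1] by simp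
  show A: "M = q1 * (1/2) - \<theta> * y1" using e1 Gd[of y1] p12 by (simp add: Pbar_diag)
  show B: "M = q1 + q2 * (1/2) - \<theta> * y2" using e2 Gd[of y2] p21 by (simp add: Pbar_diag)
  show "\<theta> * y2 - \<theta> * y1 = 1/2" using A B q by argo
qed

lemma a_facts: "a \<ge> 1" "a \<ge> 2*b\<^sup>2/(c-\<theta>)" "a > 2*Wc b \<theta>*(c+\<theta>)/(c-\<theta>)"
  using A2_facts[OF b th big] by auto

lemma tp_D2a: assumes h: "contestP a b c y1 y2 \<le> 0"
  shows "q1 * (c - 2*b*y1 + a*y1\<^sup>2) \<le> \<theta>"
proof (rule ccontr)
  define g where "g = c - 2*b*y1 + a*y1\<^sup>2"
  assume "\<not> q1 * (c - 2*b*y1 + a*y1\<^sup>2) \<le> \<theta>"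
  then have gq: "q1 * g > \<theta>" unfolding g_def by simp
  define \<delta> where "\<delta> = q1 * g - \<theta>"
  have d0: "\<delta> > 0" using gq unfolding \<delta>_def by simp
  have q1le: "q1 \<le> 1" using q by simp
  have "0 < q1 * g" using gq th by linarith
  then have g0: "g > 0" using q(1) by (simp add: zero_less_mult_iff)
  have a1: "a \<ge> 1" using a_facts by simp
  have ay: "a * y1 \<ge> 0" using a1 y by simp
  define \<epsilon> where "\<epsilon> = min (min 1 (\<delta>/(2*b))) (1/(2*(g + a*y1)))"
  have gay: "g + a*y1 > 0" using g0 ay by simp
  have ep: "\<epsilon> > 0" unfolding \<epsilon>_def using d0 b gay by simp
  have ep1: "\<epsilon> \<le> 1" unfolding \<epsilon>_def by simp
  have ep2: "\<epsilon> \<le> \<delta>/(2*b)" unfolding \<epsilon>_def by simp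
  have ep3: "\<epsilon> \<le> 1/(2*(g + a*y1))" unfolding \<epsilon>_def by simp
  have eb: "\<epsilon> * b \<le> \<delta>/2" using ep2 b by (simp add: field_simps)
  define h where "h = g + \<epsilon>*(a*y1 - b)"
  have Pe: "contestP a b c (y1+\<epsilon>) y1 = 1/2 + \<epsilon>*h"
    using P_shift[of a b c y1 \<epsilon> y1] P_diag[of a b c y1]
    unfolding h_def g_def by (simp add: power2_eq_square algebra_simps)
  have eay: "\<epsilon> * (a*y1) \<ge> 0" using ep ay by simp
  have hlo: "h \<ge> g - \<epsilon>*b" using eay unfolding h_def by (simp add: algebra_simps)
  have eay2: "\<epsilon> * (a*y1) \<le> a*y1" using ep1 ay ep by (intro mult_left_le_one_le) auto
  have hexp: "h = g + \<epsilon>*(a*y1) - \<epsilon>*b" unfolding h_def by (simp add: algebra_simps)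
  have ebp: "\<epsilon>*b > 0" using ep b by simp
  have hhi: "h \<le> g + a*y1" using hexp eay2 ebp by linarith
  have "\<epsilon> * h \<le> \<epsilon> * (g + a*y1)" using hhi ep by simp
  also have "\<epsilon> * (g + a*y1) \<le> 1/2" using ep3 gay by (simp add: field_simps)
  finally have eh: "\<epsilon> * h \<le> 1/2" .
  have hpos: "h > 0" using hlo eb d0 \<delta>_def g0 q1le gq
  proof -
    have "q1 * g \<le> g" using q1le g0 q by (intro mult_left_le_one_le) auto
    then have "\<delta> \<le> g" using th unfolding \<delta>_def by simp
    then show ?thesis using hlo eb d0 by argo
  qed
  have eh0: "\<epsilon> * h \<ge> 0" using hpos ep by simp
  have Pb: "contestPbar a b c (y1+\<epsilon>) y1 = 1/2 + \<epsilon>*h"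
    using Pbar_in[of a b c "y1+\<epsilon>" y1] Pe eh eh0 by simp
  have M1: "M = q1 * (1/2) - \<theta> * y1" using tp_D2_sum(2)[OF h] .
  have G1: "G (y1+\<epsilon>) \<ge> q1 * (1/2 + \<epsilon>*h) - \<theta> * (y1+\<epsilon>)"
    using Gd[of "y1+\<epsilon>"] Pb Pbar_bounds(1)[of a b c "y1+\<epsilon>" y2] q by simp
  have qh: "q1 * h \<ge> q1 * g - \<epsilon> * b"
  proof -
    have "q1 * h \<ge> q1 * (g - \<epsilon>*b)" using hlo q by (simp add: mult_left_mono)
    moreover have "q1 * (\<epsilon>*b) \<le> \<epsilon>*b" using q1le ep b q by (intro mult_left_le_one_le) auto
    ultimately show ?thesis by (simp add: algebra_simps)
  qed
  have L1: "q1 * (1/2 + \<epsilon>*h) - \<theta> * (y1+\<epsilon>) - M = \<epsilon> * (q1*h - \<theta>)"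
    using M1 by (simp add: algebra_simps)
  have L2: "\<epsilon> * (q1*h - \<theta>) \<ge> \<epsilon> * (\<delta>/2)"
  proof (rule mult_left_mono)
    show "\<delta>/2 \<le> q1*h - \<theta>" using qh eb unfolding \<delta>_def by simp
  qed (use ep in simp)
  have "G (y1+\<epsilon>) - M \<ge> \<epsilon> * (\<delta>/2)" using G1 L1 L2 by linarith
  moreover have "\<epsilon> * (\<delta>/2) > 0" using ep d0 by simp
  ultimately show False using le[of "y1+\<epsilon>"] y ep by simp
qed

lemma tp_D2: assumes h: "contestP a b c y1 y2 \<le> 0" shows False
proof -
  note S = tp_D2_sum[OF h]
  have qa: "q1 * (c - 2*b*y1 + a*y1\<^sup>2) \<le> \<theta>" by (rule tp_D2a[OF h])
  have g11: "c - 2*b*y1 + a*y1\<^sup>2 \<ge> (c+\<theta>)/2" by (rule diag_lb[OF b th a_facts(2)])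
  have "q1 * ((c+\<theta>)/2) \<le> q1 * (c - 2*b*y1 + a*y1\<^sup>2)" using g11 q by (intro mult_left_mono) auto
  then have q1b: "q1 * (c+\<theta>) \<le> 2*\<theta>" using qa by simp
  have q2b: "q2 * (c+\<theta>) \<ge> c - \<theta>"
  proof -
    have qq: "q2 = 1 - q1" using q(3) by simp
    have "(1 - q1) * (c+\<theta>) = (c+\<theta>) - q1 * (c+\<theta>)" by (simp add: algebra_simps)
    then have "q2 * (c+\<theta>) = (c+\<theta>) - q1 * (c+\<theta>)" unfolding qq .
    then show ?thesis using q1b by simp
  qed
  define t where "t = y2"
  have ty: "y1 \<le> t" using y unfolding t_def by simp
  have t0: "t > 0" using y unfolding t_def by simp
  have "\<theta> * y1 \<ge> 0" using th y by simp
  then have tt: "\<theta> * t \<ge> 1/2" using S(1) unfolding t_def by simp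
  have it: "1/t \<le> 2*\<theta>" using tt t0 by (simp add: field_simps)
  have it0: "1/t > 0" using t0 by simp
  have a1: "a \<ge> 1" using a_facts by simp
  then have a0: "a > 0" by simp
  define e where "e = 1/(a*t\<^sup>2)"
  have e0: "e > 0" unfolding e_def using a0 t0 by simp
  have ate: "a * t\<^sup>2 * e = 1" unfolding e_def using a0 t0 by simp
  have B1: "t * e \<le> 2*\<theta>/a"
  proof -
    have "t * e = (1/t)/a" unfolding e_def using t0 a0 by (simp add: power2_eq_square field_simps)
    also have "\<dots> \<le> (2*\<theta>)/a" using it a0 by (intro divide_right_mono) auto
    finally show ?thesis by simp
  qed
  have B2: "e \<le> 4*\<theta>\<^sup>2/a"
  proof -
    have "e = (1/t)\<^sup>2/a" unfolding e_def using t0 a0 by (simp add: power2_eq_square field_simps)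
    also have "\<dots> \<le> (2*\<theta>)\<^sup>2/a" using it it0 a0 by (intro divide_right_mono power_mono) auto
    finally show ?thesis by (simp add: power2_eq_square)
  qed
  have B3: "e\<^sup>2 \<le> 16*\<theta>^4/a"
  proof -
    have "e\<^sup>2 \<le> (4*\<theta>\<^sup>2/a)\<^sup>2" using B2 e0 by (intro power_mono) auto
    also have "\<dots> = (16*\<theta>^4/a) * (1/a)" by (simp add: power2_eq_square power4_eq_xxxx field_simps)
    also have "\<dots> \<le> (16*\<theta>^4/a) * 1" using a1 a0 th by (intro mult_left_mono) auto
    finally show ?thesis by simp
  qed
  define L where "L = 2*b*(t*e) + b*e\<^sup>2"
  have L0: "L \<ge> 0" unfolding L_def using b t0 e0 by simp
  have LW: "L + \<theta>*e \<le> Wc b \<theta> / a"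
  proof -
    have 1: "2*b*(t*e) \<le> 2*b*(2*\<theta>/a)" by (rule mult_left_mono[OF B1]) (use b in simp)
    have 2: "b*e\<^sup>2 \<le> b*(16*\<theta>^4/a)" by (rule mult_left_mono[OF B3]) (use b in simp)
    have 3: "\<theta>*e \<le> \<theta>*(4*\<theta>\<^sup>2/a)" by (rule mult_left_mono[OF B2]) (use th in simp)
    have 4: "2*b*(2*\<theta>/a) + b*(16*\<theta>^4/a) + \<theta>*(4*\<theta>\<^sup>2/a) = Wc b \<theta> / a"
      unfolding Wc_def using a0 by (simp add: field_simps power2_eq_square power4_eq_xxxx power3_eq_cube)
    show ?thesis using 1 2 3 4 unfolding L_def by linarith
  qed
  have Wa: "Wc b \<theta> / a < (c-\<theta>)/(2*(c+\<theta>))"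
  proof -
    have "2*Wc b \<theta>*(c+\<theta>)/(c-\<theta>) < a" using a_facts(3) .
    then have "2*Wc b \<theta>*(c+\<theta>) < a * (c-\<theta>)" using th by (simp add: field_simps)
    then show ?thesis using a0 th by (simp add: field_simps)
  qed
  have Wh: "(c-\<theta>)/(2*(c+\<theta>)) \<le> 1/2" using th by (simp add: field_simps)
  have q2h: "q2/2 \<ge> (c-\<theta>)/(2*(c+\<theta>))" using q2b th by (simp add: field_simps)
  have the: "\<theta>*e > 0" using th e0 by simp
  have gen: "\<And>X Y::real. L + \<theta>*e \<le> X \<Longrightarrow> X < Y \<Longrightarrow> Y \<le> 1/2 \<Longrightarrow> 0 < \<theta>*e \<Longrightarrow> L \<le> 1/2"
    by linarith
  have Lh: "L \<le> 1/2" by (rule gen[OF LW Wa Wh the])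
  have P1: "contestP a b c (t+e) t \<ge> 1"
  proof -
    have x: "e * (c - 2*b*t + 2*a*t*t - a*t\<^sup>2) + e\<^sup>2 * (a*t - b) = e*c + (a*t\<^sup>2*e) + e\<^sup>2*(a*t) - L"
      unfolding L_def by (simp add: algebra_simps power2_eq_square)
    have "contestP a b c (t+e) t = 1/2 + (e*c + 1 + e\<^sup>2*(a*t) - L)"
      using P_shift[of a b c t e t] P_diag[of a b c t] x ate by simp
    moreover have "e*c \<ge> 0" "e\<^sup>2*(a*t) \<ge> 0" using e0 c a0 t0 by auto
    ultimately show ?thesis using Lh by linarith
  qed
  have Pb1: "contestPbar a b c (t+e) t = 1" by (rule Pbar_ge1[OF P1])
  have P2: "contestP a b c (t+e) y1 \<ge> 1 - L"
  proof -
    have p: "contestP a b c t y1 \<ge> 1" using h P_swap[of a b c t y1] unfolding t_def by simp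
    have x: "e * (c - 2*b*t + 2*a*t*y1 - a*y1\<^sup>2) + e\<^sup>2 * (a*y1 - b) = e*c + e*(a*y1*(2*t - y1)) + e\<^sup>2*(a*y1) - L"
      unfolding L_def by (simp add: algebra_simps power2_eq_square)
    have "e*c \<ge> 0" "e*(a*y1*(2*t - y1)) \<ge> 0" "e\<^sup>2*(a*y1) \<ge> 0" using e0 c a0 y ty by auto
    then show ?thesis using P_shift[of a b c t e y1] x p by linarith
  qed
  have Pb2: "contestPbar a b c (t+e) y1 \<ge> 1 - L"
    using Pbar_lb[of a b c "t+e" y1] P2 L0 by linarith
  have M2: "M = q1 + q2 * (1/2) - \<theta> * t" using S(3) unfolding t_def .
  have G1: "G (t+e) = q1 * contestPbar a b c (t+e) y1 + q2 - \<theta> * (t+e)"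
    using Gd[of "t+e"] Pb1 unfolding t_def by simp
  have "q1 * contestPbar a b c (t+e) y1 \<ge> q1 * (1 - L)" using Pb2 q by (intro mult_left_mono) auto
  moreover have "q1 * L \<le> L" using q L0 by (intro mult_left_le_one_le) auto
  ultimately have "G (t+e) - M \<ge> q2/2 - L - \<theta>*e" using G1 M2 by (simp add: algebra_simps)
  then have "G (t+e) > M" using LW Wa q2h by linarith
  then show False using le[of "t+e"] t0 e0 by simp
qed

lemma tp_D3: assumes h0: "0 < contestP a b c y1 y2" and h1: "contestP a b c y1 y2 < 1"
  and cI: "a*(q1*y1 + q2*y2) = b \<Longrightarrow> a*(q1*y1\<^sup>2 + q2*y2\<^sup>2) = c - \<theta> \<Longrightarrow> False"
  shows False
proof -
  define p where "p = contestP a b c y2 y1"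
  have pe: "p = 1 - contestP a b c y1 y2" unfolding p_def by (rule P_swap)
  have p0: "0 < p" and p1: "p < 1" using h0 h1 pe by auto
  define d1 where "d1 = c - 2*b*y2 + 2*a*y2*y1 - a*y1\<^sup>2"
  define e1 where "e1 = a*y1 - b"
  define d2 where "d2 = c - 2*b*y2 + 2*a*y2*y2 - a*y2\<^sup>2"
  define e2 where "e2 = a*y2 - b"
  define Q where "Q = (\<lambda>z. q1 * contestP a b c z y1 + q2 * contestP a b c z y2 - \<theta> * z)"
  define D where "D = q1*d1 + q2*d2 - \<theta>"
  define \<alpha> where "\<alpha> = q1*e1 + q2*e2"
  have Ps1: "contestP a b c (y2+\<epsilon>) y1 = p + (\<epsilon>*d1 + \<epsilon>\<^sup>2*e1)" for \<epsilon>
    using P_shift[of a b c y2 \<epsilon> y1] unfolding p_def d1_def e1_def by simp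
  have Ps2: "contestP a b c (y2+\<epsilon>) y2 = 1/2 + (\<epsilon>*d2 + \<epsilon>\<^sup>2*e2)" for \<epsilon>
    using P_shift[of a b c y2 \<epsilon> y2] P_diag[of a b c y2] unfolding d2_def e2_def by simp
  have Qs: "Q (y2+\<epsilon>) = Q y2 + \<epsilon>*D + \<epsilon>\<^sup>2*\<alpha>" for \<epsilon>
  proof -
    have "Q (y2+\<epsilon>) = q1 * (p + (\<epsilon>*d1 + \<epsilon>\<^sup>2*e1)) + q2 * (1/2 + (\<epsilon>*d2 + \<epsilon>\<^sup>2*e2)) - \<theta> * (y2+\<epsilon>)"
      unfolding Q_def Ps1 Ps2 ..
    moreover have "Q y2 = q1 * p + q2 * (1/2) - \<theta> * y2" unfolding Q_def p_def by (simp add: P_diag)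
    ultimately show ?thesis unfolding D_def \<alpha>_def by (simp add: algebra_simps)
  qed
  have GQ: "G z = Q z" if "0 \<le> contestP a b c z y1" "contestP a b c z y1 \<le> 1"
      "0 \<le> contestP a b c z y2" "contestP a b c z y2 \<le> 1" for z
    using Gd[of z] Pbar_in[OF that(1,2)] Pbar_in[OF that(3,4)] unfolding Q_def by simp
  have Qy2: "Q y2 = M"
    using GQ[of y2] e2 p0 p1 unfolding p_def by (simp add: P_diag)
  have Qy1: "Q y1 = M"
    using GQ[of y1] e1 h0 h1 by (simp add: P_diag)
  define m where "m = min p (1 - p)"
  have m0: "m > 0" unfolding m_def using p0 p1 by simp
  define \<epsilon>1 where "\<epsilon>1 = min (min 1 (y2 - y1)) (min (m/(\<bar>d1\<bar>+\<bar>e1\<bar>+1)) ((1/2)/(\<bar>d2\<bar>+\<bar>e2\<bar>+1)))"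
  have E0: "\<epsilon>1 > 0" unfolding \<epsilon>1_def using y m0 by (simp add: add_pos_nonneg)
  have near: "Q (y2+\<epsilon>) \<le> M" if "\<bar>\<epsilon>\<bar> \<le> \<epsilon>1" for \<epsilon>
  proof -
    have a1: "\<bar>\<epsilon>\<bar> \<le> 1" "\<bar>\<epsilon>\<bar> \<le> y2 - y1" "\<bar>\<epsilon>\<bar> \<le> m/(\<bar>d1\<bar>+\<bar>e1\<bar>+1)"
        "\<bar>\<epsilon>\<bar> \<le> (1/2)/(\<bar>d2\<bar>+\<bar>e2\<bar>+1)"
      using that unfolding \<epsilon>1_def by auto
    have b1: "\<bar>\<epsilon>*d1 + \<epsilon>\<^sup>2*e1\<bar> \<le> m" by (rule small_bound[OF a1(1) a1(3)]) (use m0 in simp)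
    have b2: "\<bar>\<epsilon>*d2 + \<epsilon>\<^sup>2*e2\<bar> \<le> 1/2" by (rule small_bound[OF a1(1) a1(4)]) simp
    have mp: "m \<le> p" "m \<le> 1 - p" unfolding m_def by auto
    have c1: "\<epsilon>*d1 + \<epsilon>\<^sup>2*e1 \<le> m" "-(\<epsilon>*d1 + \<epsilon>\<^sup>2*e1) \<le> m" using b1 unfolding abs_le_iff by auto
    have c2: "\<epsilon>*d2 + \<epsilon>\<^sup>2*e2 \<le> 1/2" "-(\<epsilon>*d2 + \<epsilon>\<^sup>2*e2) \<le> 1/2" using b2 unfolding abs_le_iff by auto
    have f1: "0 \<le> contestP a b c (y2+\<epsilon>) y1" unfolding Ps1 using c1 mp by linarith
    have f2: "contestP a b c (y2+\<epsilon>) y1 \<le> 1" unfolding Ps1 using c1 mp by linarith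
    have f3: "0 \<le> contestP a b c (y2+\<epsilon>) y2" unfolding Ps2 using c2 by linarith
    have f4: "contestP a b c (y2+\<epsilon>) y2 \<le> 1" unfolding Ps2 using c2 by linarith
    have "G (y2+\<epsilon>) = Q (y2+\<epsilon>)" by (rule GQ[OF f1 f2 f3 f4])
    moreover have "0 \<le> y2 + \<epsilon>" using a1(2) y by (simp add: abs_le_iff)
    ultimately show ?thesis using le[of "y2+\<epsilon>"] by simp
  qed
  have up: "\<epsilon>*D + \<epsilon>\<^sup>2*\<alpha> \<le> 0" and dn: "-(\<epsilon>*D) + \<epsilon>\<^sup>2*\<alpha> \<le> 0" if "0 < \<epsilon>" "\<epsilon> \<le> \<epsilon>1" for \<epsilon>
  proof -
    show "\<epsilon>*D + \<epsilon>\<^sup>2*\<alpha> \<le> 0" using near[of \<epsilon>] Qs[of \<epsilon>] Qy2 that by simp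
    show "-(\<epsilon>*D) + \<epsilon>\<^sup>2*\<alpha> \<le> 0" using near[of "-\<epsilon>"] Qs[of "-\<epsilon>"] Qy2 that by simp
  qed
  have D0: "D = 0"
  proof (rule ccontr)
    assume Dn: "D \<noteq> 0"
    define \<epsilon> where "\<epsilon> = min \<epsilon>1 (\<bar>D\<bar>/(\<bar>\<alpha>\<bar>+1))"
    have ep: "\<epsilon> > 0" unfolding \<epsilon>_def using E0 Dn by (simp add: add_pos_nonneg)
    have ep1: "\<epsilon> \<le> \<epsilon>1" unfolding \<epsilon>_def by simp
    have "\<epsilon> * \<bar>\<alpha>\<bar> < \<bar>D\<bar>"
    proof -
      have "\<epsilon> * \<bar>\<alpha>\<bar> \<le> (\<bar>D\<bar>/(\<bar>\<alpha>\<bar>+1)) * \<bar>\<alpha>\<bar>" unfolding \<epsilon>_def by (intro mult_right_mono) auto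
      also have "\<dots> < \<bar>D\<bar>" using Dn by (simp add: field_simps)
      finally show ?thesis .
    qed
    then have "\<epsilon> * (\<epsilon> * \<bar>\<alpha>\<bar>) < \<epsilon> * \<bar>D\<bar>" using ep by simp
    then have key: "\<epsilon>\<^sup>2 * \<bar>\<alpha>\<bar> < \<epsilon> * \<bar>D\<bar>" by (simp add: power2_eq_square mult.assoc)
    have ab: "\<bar>\<epsilon>\<^sup>2 * \<alpha>\<bar> = \<epsilon>\<^sup>2 * \<bar>\<alpha>\<bar>" by (simp add: abs_mult)
    have "- (\<epsilon>\<^sup>2 * \<bar>\<alpha>\<bar>) \<le> \<epsilon>\<^sup>2 * \<alpha>" using abs_ge_minus_self[of "\<epsilon>\<^sup>2 * \<alpha>"] ab by linarith
    then have lower: "- (\<epsilon>\<^sup>2 * \<bar>\<alpha>\<bar>) \<le> \<epsilon>\<^sup>2 * \<alpha>" .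
    show False
    proof (cases "D > 0")
      case True
      then have "\<epsilon>*\<bar>D\<bar> = \<epsilon>*D" by simp
      then show False using up[OF ep ep1] key lower by linarith
    next
      case False
      then have "D < 0" using Dn by simp
      then have "\<epsilon>*\<bar>D\<bar> = -(\<epsilon>*D)" by simp
      then show False using dn[OF ep ep1] key lower by linarith
    qed
  qed
  have "Q y1 = Q y2 + (y1-y2)*D + (y1-y2)\<^sup>2*\<alpha>" using Qs[of "y1-y2"] by simp
  then have "(y1-y2)\<^sup>2*\<alpha> = 0" using Qy1 Qy2 D0 by simp
  then have al0: "\<alpha> = 0" using y by simp
  have m1e: "a*(q1*y1 + q2*y2) = b"
  proof -
    have "\<alpha> = a*(q1*y1 + q2*y2) - b*(q1+q2)" unfolding \<alpha>_def e1_def e2_def by (simp add: algebra_simps)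
    then show ?thesis using al0 q(3) by simp
  qed
  have "D = (q1+q2)*(c - 2*b*y2) + 2*y2*(a*(q1*y1 + q2*y2)) - a*(q1*y1\<^sup>2 + q2*y2\<^sup>2) - \<theta>"
    unfolding D_def d1_def d2_def by (simp add: algebra_simps power2_eq_square)
  then have "D = 1*(c - 2*b*y2) + 2*y2*b - a*(q1*y1\<^sup>2 + q2*y2\<^sup>2) - \<theta>" by (simp only: q(3) m1e)
  then have "D = c - \<theta> - a*(q1*y1\<^sup>2 + q2*y2\<^sup>2)" by (simp add: algebra_simps)
  then have "a*(q1*y1\<^sup>2 + q2*y2\<^sup>2) = c - \<theta>" using D0 by simp
  then show False using cI m1e by blast
qed

lemma tp_all:
  assumes cI: "a*(q1*y1 + q2*y2) = b \<Longrightarrow> a*(q1*y1\<^sup>2 + q2*y2\<^sup>2) = c - \<theta> \<Longrightarrow> False"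
  shows False
proof (cases "1 \<le> contestP a b c y1 y2")
  case True then show False by (rule tp_D1)
next
  case F1: False
  show False
  proof (cases "contestP a b c y1 y2 \<le> 0")
    case True then show False by (rule tp_D2)
  next
    case False
    have h0: "0 < contestP a b c y1 y2" using False by simp
    have h1: "contestP a b c y1 y2 < 1" using F1 by simp
    show False by (rule tp_D3[OF h0 h1 cI])
  qed
qed

end

lemma atom_ae:
  assumes ms: "mixed_strategy \<rho>" and ae: "AE x in \<rho>. P x" and pos: "measure \<rho> {y} > 0"
  shows "P y"
proof (rule ccontr)
  assume nP: "\<not> P y"
  interpret prob_space \<rho> using ms ms_prob by blast
  from ae obtain N where N: "{x \<in> space \<rho>. \<not> P x} \<subseteq> N" "emeasure \<rho> N = 0" "N \<in> sets \<rho>"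
    by (rule AE_E)
  have "y \<in> N" using N(1) nP ms_space[OF ms] by auto
  then have "emeasure \<rho> {y} \<le> emeasure \<rho> N" using N(3) by (intro emeasure_mono) auto
  then have "emeasure \<rho> {y} = 0" using N(2) by simp
  then have "measure \<rho> {y} = 0" by (simp add: measure_def)
  then show False using pos by simp
qed

lemma two_atoms:
  assumes ms: "mixed_strategy \<rho>" and two: "AE x in \<rho>. x = r1 \<or> x = r2" and nd: "nondegenerate \<rho>"
  shows "r1 \<noteq> r2" "measure \<rho> {r1} > 0" "measure \<rho> {r2} > 0" "measure \<rho> {r1} + measure \<rho> {r2} = 1"
    "\<And>f. f \<in> borel_measurable borel \<Longrightarrow> (\<integral>x. f x \<partial>\<rho>) = measure \<rho> {r1} * f r1 + measure \<rho> {r2} * f r2"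
proof -
  interpret prob_space \<rho> using ms ms_prob by blast
  have sets: "sets \<rho> = sets borel" using ms_sets[OF ms] .
  have ev: "{r} \<in> sets \<rho>" for r using sets by simp
  show ne: "r1 \<noteq> r2"
  proof
    assume "r1 = r2"
    then have "AE x in \<rho>. x = r1" using two by simp
    then show False using nd unfolding nondegenerate_def by blast
  qed
  have pos: "measure \<rho> {r} > 0" if "AE x in \<rho>. x = r \<or> x = r'" "\<not> (AE x in \<rho>. x = r')" for r r'
  proof (rule ccontr)
    assume "\<not> measure \<rho> {r} > 0"
    then have "measure \<rho> {r} = 0" using measure_nonneg[of \<rho> "{r}"] by linarith
    then have N: "{r} \<in> null_sets \<rho>" using ev by (simp add: null_sets_def emeasure_eq_measure)
    have "AE x in \<rho>. x \<noteq> r" by (rule AE_I'[OF N]) auto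
    then have "AE x in \<rho>. x = r'" using that(1) by eventually_elim auto
    then show False using that(2) by blast
  qed
  show p1: "measure \<rho> {r1} > 0"
    by (rule pos[OF two]) (use nd in \<open>auto simp: nondegenerate_def\<close>)
  have two': "AE x in \<rho>. x = r2 \<or> x = r1" using two by eventually_elim auto
  show p2: "measure \<rho> {r2} > 0"
    by (rule pos[OF two']) (use nd in \<open>auto simp: nondegenerate_def\<close>)
  have "AE x in \<rho>. x \<in> {r1, r2}" using two by eventually_elim auto
  then have P1: "prob {r1, r2} = 1" using AE_in_set_eq_1[of "{r1,r2}"] sets by simp
  have U: "prob ({r1} \<union> {r2}) = prob {r1} + prob {r2}"
    by (rule finite_measure_Union) (use ev ne in auto)
  have E: "{r1} \<union> {r2} = {r1, r2}" by auto
  have "prob {r1, r2} = prob {r1} + prob {r2}" using U unfolding E .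
  then show sum: "measure \<rho> {r1} + measure \<rho> {r2} = 1" using P1 by simp
  fix f :: "real \<Rightarrow> real" assume fm: "f \<in> borel_measurable borel"
  have "(\<integral>x. f x \<partial>\<rho>) = (\<integral>x. f r1 * indicator {r1} x + f r2 * indicator {r2} x \<partial>\<rho>)"
  proof (rule integral_cong_AE)
    show "f \<in> borel_measurable \<rho>" using ms_meas[OF ms fm] .
    show "(\<lambda>x. f r1 * indicator {r1} x + f r2 * indicator {r2} x) \<in> borel_measurable \<rho>"
      by (rule ms_meas[OF ms]) measurable
    show "AE x in \<rho>. f x = f r1 * indicator {r1} x + f r2 * indicator {r2} x"
      using two by eventually_elim (use ne in auto)
  qed
  also have "\<dots> = f r1 * measure \<rho> {r1} + f r2 * measure \<rho> {r2}"
  proof -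
    have i1: "integrable \<rho> (indicator {r1} :: real \<Rightarrow> real)"
      using ev by (intro integrable_real_indicator) (auto simp: emeasure_eq_measure)
    have i2: "integrable \<rho> (indicator {r2} :: real \<Rightarrow> real)"
      using ev by (intro integrable_real_indicator) (auto simp: emeasure_eq_measure)
    have "(\<integral>x. f r1 * indicator {r1} x + f r2 * indicator {r2} x \<partial>\<rho>)
        = (\<integral>x. f r1 * indicator {r1} x \<partial>\<rho>) + (\<integral>x. f r2 * indicator {r2} x \<partial>\<rho>)"
      by (rule Bochner_Integration.integral_add) (use i1 i2 in auto)
    also have "\<dots> = f r1 * (\<integral>x. indicator {r1} x \<partial>\<rho>) + f r2 * (\<integral>x. indicator {r2} x \<partial>\<rho>)"
      by simp
    also have "\<dots> = f r1 * measure \<rho> {r1} + f r2 * measure \<rho> {r2}"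
      using ms_space[OF ms] by simp
    finally show ?thesis .
  qed
  finally show "(\<integral>x. f x \<partial>\<rho>) = measure \<rho> {r1} * f r1 + measure \<rho> {r2} * f r2" by simp
qed


lemma quad_roots:
  fixes \<alpha> \<beta> \<gamma> :: real
  assumes "\<not> (\<alpha> = 0 \<and> \<beta> = 0)"
  shows "\<exists>r1 r2. \<forall>x. \<alpha>*x\<^sup>2 + \<beta>*x + \<gamma> = 0 \<longrightarrow> x = r1 \<or> x = r2"
proof (cases "\<exists>r. \<alpha>*r\<^sup>2 + \<beta>*r + \<gamma> = 0")
  case False then show ?thesis by auto
next
  case True
  then obtain r where r: "\<alpha>*r\<^sup>2 + \<beta>*r + \<gamma> = 0" by blast
  have fac: "\<alpha>*x\<^sup>2 + \<beta>*x + \<gamma> = (x - r) * (\<alpha>*(x + r) + \<beta>)" for x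
  proof -
    have "(x - r) * (\<alpha>*(x + r) + \<beta>) = (\<alpha>*x\<^sup>2 + \<beta>*x + \<gamma>) - (\<alpha>*r\<^sup>2 + \<beta>*r + \<gamma>)"
      by (simp add: algebra_simps power2_eq_square)
    then show ?thesis using r by simp
  qed
  show ?thesis
  proof (cases "\<alpha> = 0")
    case True
    then have b0: "\<beta> \<noteq> 0" using assms by simp
    show ?thesis
    proof (intro exI allI impI)
      fix x assume "\<alpha>*x\<^sup>2 + \<beta>*x + \<gamma> = 0"
      then have "(x - r) * \<beta> = 0" using fac[of x] True by simp
      then show "x = r \<or> x = r" using b0 by simp
    qed
  next
    case False
    show ?thesis
    proof (intro exI allI impI)
      fix x assume "\<alpha>*x\<^sup>2 + \<beta>*x + \<gamma> = 0"
      then have "(x - r) * (\<alpha>*(x + r) + \<beta>) = 0" using fac[of x] by simp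
      then have "x = r \<or> \<alpha>*(x + r) + \<beta> = 0" by simp
      then show "x = r \<or> x = -(\<alpha>*r + \<beta>)/\<alpha>"
      proof
        assume "\<alpha>*(x + r) + \<beta> = 0"
        then have "\<alpha> * x = -(\<alpha>*r + \<beta>)" by (simp add: algebra_simps)
        then show ?thesis using False by (simp add: field_simps)
      qed simp
    qed
  qed
qed

lemma nondeg_ord:
  fixes a b c \<theta> y1 y2 :: real
  assumes b: "b > 0" and c: "c > 0" and th: "0 < \<theta>" "\<theta> < c"
    and big1: "a \<ge> A2 b c \<theta>" and big2: "a \<ge> (S0 b c \<theta>)\<^sup>2" and ms: "mixed_strategy \<rho>"
    and le: "\<forall>z\<ge>0. Gf a b c \<theta> \<rho> z \<le> Mf \<theta> \<rho>" and ae: "AE x in \<rho>. Gf a b c \<theta> \<rho> x = Mf \<theta> \<rho>"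
    and y: "y1 < y2" and q1p: "measure \<rho> {y1} > 0" and q2p: "measure \<rho> {y2} > 0"
    and sum: "measure \<rho> {y1} + measure \<rho> {y2} = 1"
    and intf: "\<And>f. f \<in> borel_measurable borel \<Longrightarrow> (\<integral>x. f x \<partial>\<rho>) = measure \<rho> {y1} * f y1 + measure \<rho> {y2} * f y2"
  shows False
proof -
  define q1 where "q1 = measure \<rho> {y1}"
  define q2 where "q2 = measure \<rho> {y2}"
  have Gd: "\<And>z. Gf a b c \<theta> \<rho> z = q1 * contestPbar a b c z y1 + q2 * contestPbar a b c z y2 - \<theta> * z"
  proof -
    fix z
    have "(\<lambda>w. contestPbar a b c z w) \<in> borel_measurable borel"
      unfolding contestPbar_def contestP_def by measurable
    then show "Gf a b c \<theta> \<rho> z = q1 * contestPbar a b c z y1 + q2 * contestPbar a b c z y2 - \<theta> * z"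
      unfolding Gf_def q1_def q2_def using intf by simp
  qed
  have le': "\<And>z. 0 \<le> z \<Longrightarrow> Gf a b c \<theta> \<rho> z \<le> Mf \<theta> \<rho>" using le by blast
  have e1: "Gf a b c \<theta> \<rho> y1 = Mf \<theta> \<rho>" by (rule atom_ae[OF ms ae q1p])
  have e2: "Gf a b c \<theta> \<rho> y2 = Mf \<theta> \<rho>" by (rule atom_ae[OF ms ae q2p])
  have y0: "0 \<le> y1" by (rule atom_ae[OF ms ms_nonneg[OF ms] q1p])
  have m1e: "m1 \<rho> = q1*y1 + q2*y2" unfolding m1_def q1_def q2_def using intf[of "\<lambda>x. x"] by simp
  have m2e: "m2 \<rho> = q1*y1\<^sup>2 + q2*y2\<^sup>2" unfolding m2_def q1_def q2_def using intf[of "\<lambda>x. x\<^sup>2"] by simp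
  have cI: "a*(q1*y1 + q2*y2) = b \<Longrightarrow> a*(q1*y1\<^sup>2 + q2*y2\<^sup>2) = c - \<theta> \<Longrightarrow> False"
    using caseI[OF b c th big2 ms le] m1e m2e by simp
  show False
    by (rule tp_all[OF b c th(1) th(2) big1 y0 y q1p[folded q1_def] q2p[folded q2_def] sum[folded q1_def q2_def]
             Gd le' e1 e2 cI])
qed

lemma nondeg_case:
  fixes a b c \<theta> :: real
  assumes b: "b > 0" and c: "c > 0" and th: "0 < \<theta>" "\<theta> < c"
    and big1: "a \<ge> A2 b c \<theta>" and big2: "a \<ge> (S0 b c \<theta>)\<^sup>2" and ms: "mixed_strategy \<rho>"
    and le: "\<forall>z\<ge>0. Gf a b c \<theta> \<rho> z \<le> Mf \<theta> \<rho>" and ae: "AE x in \<rho>. Gf a b c \<theta> \<rho> x = Mf \<theta> \<rho>"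
    and two: "AE x in \<rho>. x = r1 \<or> x = r2" and nd: "nondegenerate \<rho>"
  shows False
proof -
  note T = two_atoms[OF ms two nd]
  show False
  proof (cases "r1 < r2")
    case True
    show False by (rule nondeg_ord[OF b c th big1 big2 ms le ae True T(2) T(3) T(4) T(5)])
  next
    case False
    then have lt: "r2 < r1" using T(1) by simp
    have s: "measure \<rho> {r2} + measure \<rho> {r1} = 1" using T(4) by simp
    have i: "(\<integral>x. f x \<partial>\<rho>) = measure \<rho> {r2} * f r2 + measure \<rho> {r1} * f r1"
      if "f \<in> borel_measurable borel" for f using T(5)[OF that] by simp
    show False by (rule nondeg_ord[OF b c th big1 big2 ms le ae lt T(3) T(2) s i])
  qed
qed

lemma finite_supp:
  fixes a b c \<theta> :: real
  assumes b: "b > 0" and c: "c > 0" and th: "0 < \<theta>" "\<theta> < c"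
    and big2: "a \<ge> (S0 b c \<theta>)\<^sup>2" and ms: "mixed_strategy \<sigma>"
    and le: "\<forall>z\<ge>0. Gf a b c \<theta> \<sigma> z \<le> Mf \<theta> \<sigma>" and ph: "AE x in \<rho>. Phi a b c \<theta> \<sigma> x = 0"
  shows "\<exists>r1 r2. AE x in \<rho>. x = r1 \<or> x = r2"
proof (cases "a * m1 \<sigma> - b = 0 \<and> c - \<theta> - a * m2 \<sigma> = 0")
  case True
  then have "a * m1 \<sigma> = b" "a * m2 \<sigma> = c - \<theta>" by auto
  then show ?thesis using caseI[OF b c th big2 ms le] by blast
next
  case False
  then obtain r1 r2 where r: "\<forall>x. (a * m1 \<sigma> - b)*x\<^sup>2 + (c - \<theta> - a * m2 \<sigma>)*x + (b * m2 \<sigma> - (c - \<theta>) * m1 \<sigma>) = 0 \<longrightarrow> x = r1 \<or> x = r2"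
    using quad_roots by blast
  have "AE x in \<rho>. x = r1 \<or> x = r2" using ph by eventually_elim (use r in \<open>auto simp: Phi_def\<close>)
  then show ?thesis by blast
qed

theorem proposition9:
  fixes b c \<theta> :: real
  assumes "b > 0" and "c > 0" and "0 < \<theta>" and "\<theta> < c"
  shows "\<exists>aF::real. \<forall>a. a > 0 \<and> a \<ge> aF \<longrightarrow>
           \<not> (\<exists>\<mu> \<nu>. mixed_equilibrium a b c \<theta> \<mu> \<nu> \<and> on_domain a b c \<mu> \<nu>)"
proof -
  note b = assms(1) and c = assms(2) and th = assms(3) assms(4)
  define aF where "aF = A2 b c \<theta> + (S0 b c \<theta>)\<^sup>2"
  have A2p: "A2 b c \<theta> \<ge> 0"
  proof -
    have "Wc b \<theta> \<ge> 0" unfolding Wc_def using b th by simp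
    then show ?thesis unfolding A2_def using th by simp
  qed
  have S2p: "(S0 b c \<theta>)\<^sup>2 \<ge> 0" by simp
  show ?thesis
  proof (intro exI[of _ aF] allI impI notI)
    fix a :: real
    assume ha: "a > 0 \<and> a \<ge> aF"
    assume "\<exists>\<mu> \<nu>. mixed_equilibrium a b c \<theta> \<mu> \<nu> \<and> on_domain a b c \<mu> \<nu>"
    then obtain \<mu> \<nu> where me: "mixed_equilibrium a b c \<theta> \<mu> \<nu>" and od: "on_domain a b c \<mu> \<nu>" by blast
    have big1: "a \<ge> A2 b c \<theta>" using ha S2p unfolding aF_def by linarith
    have big2: "a \<ge> (S0 b c \<theta>)\<^sup>2" using ha A2p unfolding aF_def by linarith
    have eq: "truncated_equilibrium a b c \<theta> \<mu> \<nu>" and nd: "nondegenerate \<mu> \<or> nondegenerate \<nu>"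
      using me unfolding mixed_equilibrium_def by auto
    note F = eq_facts[OF eq]
    note Ph = Phi_ae[OF eq od]
    obtain r1 r2 where R: "AE x in \<mu>. x = r1 \<or> x = r2"
      using finite_supp[OF b c th big2 F(2) F(3) Ph(1)] by blast
    obtain s1 s2 where S: "AE x in \<nu>. x = s1 \<or> x = s2"
      using finite_supp[OF b c th big2 F(1) F(4) Ph(2)] by blast
    from nd show False
    proof
      assume "nondegenerate \<mu>"
      then show False by (rule nondeg_case[OF b c th big1 big2 F(1) F(4) F(7) R])
    next
      assume "nondegenerate \<nu>"
      then show False by (rule nondeg_case[OF b c th big1 big2 F(2) F(3) F(6) S])
    qed
  qed
qed


end
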